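(* Let $N=2^L$ with $L$ a positive integer, let $D_1,\ldots,D_N,R$ be positive integers, and let $\mathcal{W}_{\mathrm{TN}}\in\mathbb{R}^{D_1\times\cdots\times D_N}$ be any tensor generated by the locally connected tensor network of width $R$ (defined in the context). Let $\mathcal{A}\in\mathbb{R}^{D_1\times\cdots\times D_N}$ and $\epsilon\in[0,\|\mathcal{A}\|/4]$. If $\|\mathcal{W}_{\mathrm{TN}}-\mathcal{A}\|\le\epsilon$, then for every canonical partition $(\mathcal{K},\mathcal{K}^c)\in\mathcal{C}_N$: $$\mathrm{QE}(\mathcal{A};\mathcal{K})\le \ln(R)+\frac{2\epsilon}{\|\mathcal{A}\|}\ln(D_{\mathcal{K}})+2\sqrt{\frac{2\epsilon}{\|\mathcal{A}\|}}$$ (with the convention that $\epsilon/\|\mathcal{A}\|=0$ if $\mathcal{A}=0$, in which case $\epsilon=0$). In contrast, there exists $\mathcal{A}'\in\mathbb{R}^{D_1\times\cdots\times D_N}$ such that for all canonical partitions $(\mathcal{K},\mathcal{K}^c)\in\mathcal{C}_N$: $$\mathrm{QE}(\mathcal{A}';\mathcal{K})\ge\min\{|\mathcal{K}|,|\mathcal{K}^c|\}\cdot\ln\big(\min_{n\in[N]}D_n\big).$$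
   Context: $[N]=\{1,\ldots,N\}$; norms are Frobenius (Euclidean) norms. For a tensor $\mathcal{A}\in\mathbb{R}^{D_1\times\cdots\times D_N}$ and $\mathcal{K}\subseteq[N]$, $\mathcal{K}^c=[N]\setminus\mathcal{K}$, $[\![\mathcal{A};\mathcal{K}]\!]$ is the matrix arrangement of $\mathcal{A}$ with rows indexed by the axes in $\mathcal{K}$ and columns by the axes in $\mathcal{K}^c$, and $D_{\mathcal{K}}:=\min\{\prod_{n\in\mathcal{K}}D_n,\prod_{n\in\mathcal{K}^c}D_n\}$. The quantum entanglement is $\mathrm{QE}(\mathcal{A};\mathcal{K}):=-\sum_{d=1}^{D_{\mathcal{K}}}\rho_d\ln\rho_d$ where $\rho_d=\sigma_d^2/\sum_{d'}\sigma_{d'}^2$ and $\sigma_1\ge\cdots\ge\sigma_{D_{\mathcal{K}}}$ are the singular values of $[\![\mathcal{A};\mathcal{K}]\!]$; by convention $\mathrm{QE}(0;\mathcal{K})=0$. The canonical partitions $\mathcal{C}_N$ are the pairs $(\mathcal{K},\mathcal{K}^c)$ with $\mathcal{K}=\{2^{L-l}(n-1)+1,\ldots,2^{L-l}n\}$ for $l\in\{0,\ldots,L\}$, $n\in[2^l]$. The locally connected tensor network of width $R$ is a tensor network whose graph is a perfect binary tree with $N$ leaves, the open edge at the $n$-th leaf (left to right) having dimension $D_n$ and all inner edges having dimension $R$; the tensors it generates are exactly those of the form: choose vectors $\phi^{(0,n)}_r\in\mathbb{R}^{D_n}$ ($n\in[N]$, $r\in[R]$); for $l=1,\ldots,L-1$,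 $n\in[2^{L-l}]$, $r\in[R]$ set $\phi^{(l,n)}_r=\sum_{i,j\in[R]}a^{(l,n)}_{r,i,j}\,\phi^{(l-1,2n-1)}_i\otimes\phi^{(l-1,2n)}_j$ with arbitrary real coefficients; and $\mathcal{W}_{\mathrm{TN}}=\sum_{i,j\in[R]}a_{i,j}\,\phi^{(L-1,1)}_i\otimes\phi^{(L-1,2)}_j$. *)

theory Defs
  imports Complex_Main "HOL-Library.FuncSet"
begin

text \<open>A tensor in R^(D_1 x ... x D_N) is represented as a real-valued function on
index tuples i :: nat \<Rightarrow> nat, where the axis n ranges over {1..N} and i n < D n.
Only the values on tidx N D matter.\<close>

type_synonym tensor = "(nat \<Rightarrow> nat) \<Rightarrow> real"

definition tidx :: "nat \<Rightarrow> (nat \<Rightarrow> nat) \<Rightarrow> (nat \<Rightarrow> nat) set" where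
  "tidx N D = PiE {1..N} (\<lambda>n. {..<D n})"

definition fnorm :: "nat \<Rightarrow> (nat \<Rightarrow> nat) \<Rightarrow> tensor \<Rightarrow> real" where
  "fnorm N D A = sqrt (\<Sum>i\<in>tidx N D. (A i)^2)"

definition rowidx :: "(nat \<Rightarrow> nat) \<Rightarrow> nat set \<Rightarrow> (nat \<Rightarrow> nat) set" where
  "rowidx D K = PiE K (\<lambda>n. {..<D n})"

definition merge_idx :: "nat set \<Rightarrow> (nat \<Rightarrow> nat) \<Rightarrow> (nat \<Rightarrow> nat) \<Rightarrow> (nat \<Rightarrow> nat)" where
  "merge_idx K r c = (\<lambda>n. if n \<in> K then r n else c n)"

definition matricize :: "nat set \<Rightarrow> tensor \<Rightarrow> (nat \<Rightarrow> nat) \<Rightarrow> (nat \<Rightarrow> nat) \<Rightarrow> real" where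
  "matricize K A r c = A (merge_idx K r c)"

definition DK :: "nat \<Rightarrow> (nat \<Rightarrow> nat) \<Rightarrow> nat set \<Rightarrow> nat" where
  "DK N D K = min (\<Prod>n\<in>K. D n) (\<Prod>n\<in>{1..N} - K. D n)"

definition is_singvals :: "nat \<Rightarrow> (nat \<Rightarrow> nat) \<Rightarrow> nat set \<Rightarrow> tensor \<Rightarrow> (nat \<Rightarrow> real) \<Rightarrow> bool" where
  "is_singvals N D K A \<sigma> \<longleftrightarrow>
     (\<forall>d\<in>{1..DK N D K}. \<sigma> d \<ge> 0) \<and>
     (\<forall>d\<in>{1..<DK N D K}. \<sigma> (Suc d) \<le> \<sigma> d) \<and>
     (\<exists>u v. (\<forall>d\<in>{1..DK N D K}. \<forall>d'\<in>{1..DK N D K}.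
                 (\<Sum>r\<in>rowidx D K. u d r * u d' r) = (if d = d' then 1 else 0) \<and>
                 (\<Sum>c\<in>rowidx D ({1..N} - K). v d c * v d' c) = (if d = d' then 1 else 0)) \<and>
            (\<forall>r\<in>rowidx D K. \<forall>c\<in>rowidx D ({1..N} - K).
                 matricize K A r c = (\<Sum>d\<in>{1..DK N D K}. \<sigma> d * u d r * v d c)))"

definition singvals :: "nat \<Rightarrow> (nat \<Rightarrow> nat) \<Rightarrow> nat set \<Rightarrow> tensor \<Rightarrow> nat \<Rightarrow> real" where
  "singvals N D K A = (SOME \<sigma>. is_singvals N D K A \<sigma>)"

text \<open>Quantum entanglement; QE(0;K) = 0 by convention (the sum of squared singular values
vanishes iff A = 0). Note ln 0 = 0 in Isabelle, so 0 ln 0 = 0.\<close>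

definition QE :: "nat \<Rightarrow> (nat \<Rightarrow> nat) \<Rightarrow> tensor \<Rightarrow> nat set \<Rightarrow> real" where
  "QE N D A K =
    (let \<sigma> = singvals N D K A;
         s = (\<Sum>d\<in>{1..DK N D K}. (\<sigma> d)^2)
     in if s = 0 then 0
        else - (\<Sum>d\<in>{1..DK N D K}. ((\<sigma> d)^2 / s) * ln ((\<sigma> d)^2 / s)))"

text \<open>Canonical partitions of [2^L]: the set K (its complement is {1..2^L} - K).\<close>

definition canonical :: "nat \<Rightarrow> nat set set" where
  "canonical L = {K. \<exists>l\<le>L. \<exists>n\<in>{1..2^l}. K = {2^(L-l)*(n-1)+1 .. 2^(L-l)*n}}"

text \<open>Locally connected tensor network. tn_node phi0 a R l n r is the tensor phi^(l,n)_r,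
which depends only on the leaves {2^l (n-1)+1 .. 2^l n}; the product of tensors on disjoint
leaf sets is their outer product.\<close>

primrec tn_node :: "(nat \<Rightarrow> nat \<Rightarrow> nat \<Rightarrow> real) \<Rightarrow> (nat \<Rightarrow> nat \<Rightarrow> nat \<Rightarrow> nat \<Rightarrow> nat \<Rightarrow> real)
                    \<Rightarrow> nat \<Rightarrow> nat \<Rightarrow> nat \<Rightarrow> nat \<Rightarrow> tensor" where
  "tn_node phi0 a R 0 n r = (\<lambda>i. phi0 n r (i n))"
| "tn_node phi0 a R (Suc l) n r =
     (\<lambda>i. \<Sum>p\<in>{1..R}. \<Sum>q\<in>{1..R}.
            a (Suc l) n r p q * tn_node phi0 a R l (2*n-1) p i * tn_node phi0 a R l (2*n) q i)"

definition is_lctn :: "nat \<Rightarrow> (nat \<Rightarrow> nat) \<Rightarrow> nat \<Rightarrow> tensor \<Rightarrow> bool" where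
  "is_lctn L D R W \<longleftrightarrow>
     (\<exists>phi0 a atop. \<forall>i\<in>tidx (2^L) D.
        W i = (\<Sum>p\<in>{1..R}. \<Sum>q\<in>{1..R}.
                 atop p q * tn_node phi0 a R (L-1) 1 p i * tn_node phi0 a R (L-1) 2 q i))"

end

theory Submission
  imports Defs "HOL-Analysis.Analysis" "HOL-Library.Function_Algebras"
begin


interpretation fvs: vector_space "(\<lambda>(c::real) (f::'a\<Rightarrow>real). (\<lambda>x. c * f x))"
  by unfold_locales (auto simp: fun_eq_iff algebra_simps)

definition ip :: "'a set \<Rightarrow> ('a \<Rightarrow> real) \<Rightarrow> ('a \<Rightarrow> real) \<Rightarrow> real" where
  "ip I x y = (\<Sum>r\<in>I. x r * y r)"

definition supp_in :: "'a set \<Rightarrow> ('a \<Rightarrow> real) \<Rightarrow> bool" where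
  "supp_in I x \<longleftrightarrow> (\<forall>r. r \<notin> I \<longrightarrow> x r = 0)"

lemma sum_fun_apply: "(sum f A) x = (\<Sum>a\<in>A. f a x)" for f :: "'b \<Rightarrow> 'a \<Rightarrow> real"
  by (induction A rule: infinite_finite_induct) auto

lemma ip_sym: "ip I x y = ip I y x"
  unfolding ip_def by (simp add: mult.commute)

lemma ip_nonneg: "ip I x x \<ge> 0"
  unfolding ip_def by (simp add: sum_nonneg)

lemma ip_pos: assumes "finite I" "supp_in I x" "x \<noteq> 0" shows "ip I x x > 0"
proof -
  from assms(3) obtain r where r: "x r \<noteq> 0" by (auto simp: fun_eq_iff)
  with assms(2) have "r \<in> I" by (auto simp: supp_in_def)
  have "0 < x r * x r" using r by (metis not_real_square_gt_zero)
  also have "\<dots> \<le> ip I x x" unfolding ip_def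
    by (rule member_le_sum) (use \<open>r \<in> I\<close> assms(1) in auto)
  finally show ?thesis .
qed

lemma ip_zero_iff: assumes "finite I" "supp_in I x" shows "ip I x x = 0 \<longleftrightarrow> x = 0"
  using ip_pos[OF assms] by (cases "x = 0") (auto simp: ip_def)

lemma ip_sum_left: "ip I (\<Sum>a\<in>A. f a) y = (\<Sum>a\<in>A. ip I (f a) y)"
  unfolding ip_def sum_fun_apply by (simp add: sum_distrib_right sum.swap[of _ I])

lemma ip_scale_left: "ip I (\<lambda>r. c * x r) y = c * ip I x y"
  unfolding ip_def by (simp add: sum_distrib_left algebra_simps)

lemma ip_diff_left: "ip I (x - z) y = ip I x y - ip I z y"
  unfolding ip_def by (simp add: sum_subtractf algebra_simps)

lemma orth_indep:
  assumes I: "finite I"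
    and S: "\<And>x. x \<in> S \<Longrightarrow> supp_in I x \<and> x \<noteq> 0"
    and O: "\<And>x y. x \<in> S \<Longrightarrow> y \<in> S \<Longrightarrow> x \<noteq> y \<Longrightarrow> ip I x y = 0"
  shows "fvs.independent S"
proof
  assume "fvs.dependent S"
  then obtain t u where t: "finite t" "t \<subseteq> S" and s0: "(\<Sum>v\<in>t. (\<lambda>x. u v * v x)) = 0"
     and v0: "\<exists>v\<in>t. u v \<noteq> 0"
    unfolding fvs.dependent_explicit by blast
  from v0 obtain w where w: "w \<in> t" "u w \<noteq> 0" by blast
  have "0 = ip I (\<Sum>v\<in>t. (\<lambda>x. u v * v x)) w" by (simp add: s0 ip_def)
  also have "\<dots> = (\<Sum>v\<in>t. u v * ip I v w)"
    by (simp add: ip_sum_left ip_scale_left)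
  also have "\<dots> = u w * ip I w w"
    by (subst sum.remove[OF t(1) w(1)], subst sum.neutral) (use O t w in auto)
  finally have "ip I w w = 0" using w by simp
  moreover have "ip I w w > 0" using S[of w] t w ip_pos[OF I] by auto
  ultimately show False by simp
qed

definition evec :: "'a \<Rightarrow> 'a \<Rightarrow> real" where "evec i = (\<lambda>r. if r = i then 1 else 0)"

lemma supp_in_span:
  assumes "finite I" "supp_in I x" shows "x \<in> fvs.span (evec ` I)"
proof -
  have "x = (\<Sum>i\<in>I. (\<lambda>r. x i * evec i r))"
  proof
    fix r
    show "x r = (\<Sum>i\<in>I. (\<lambda>r. x i * evec i r)) r"
      using assms by (cases "r \<in> I") (auto simp: sum_fun_apply evec_def supp_in_def if_distrib cong: if_cong)
  qed
  also have "\<dots> \<in> fvs.span (evec ` I)"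
    by (intro fvs.span_sum fvs.span_scale fvs.span_base) auto
  finally show ?thesis .
qed

lemma ortho_card:
  assumes I: "finite I"
    and S: "\<And>x. x \<in> S \<Longrightarrow> supp_in I x \<and> x \<noteq> 0"
    and O: "\<And>x y. x \<in> S \<Longrightarrow> y \<in> S \<Longrightarrow> x \<noteq> y \<Longrightarrow> ip I x y = 0"
  shows "finite S \<and> card S \<le> card I"
proof -
  have "finite S \<and> card S \<le> card (evec ` I)"
    by (rule fvs.independent_span_bound) (use orth_indep[OF I S O] supp_in_span[OF I] S I in auto)
  moreover have "card (evec ` I) \<le> card I" by (rule card_image_le[OF I])
  ultimately show ?thesis by linarith
qed

lemma exists_orth:
  assumes I: "finite I" and D: "finite D" and cD: "card D < card I"
    and U: "\<And>d. d \<in> D \<Longrightarrow> supp_in I (u d) \<and> ip I (u d) (u d) = 1"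
    and O: "\<And>d d'. d \<in> D \<Longrightarrow> d' \<in> D \<Longrightarrow> d \<noteq> d' \<Longrightarrow> ip I (u d) (u d') = 0"
  shows "\<exists>x. supp_in I x \<and> ip I x x = 1 \<and> (\<forall>d\<in>D. ip I x (u d) = 0)"
proof -
  have "\<exists>i\<in>I. evec i \<notin> fvs.span (u ` D)"
  proof (rule ccontr)
    assume "\<not> ?thesis"
    then have sub: "evec ` I \<subseteq> fvs.span (u ` D)" by auto
    have ind: "fvs.independent (evec ` I)"
    proof (rule orth_indep[OF I])
      fix x y assume "x \<in> evec ` I" "y \<in> evec ` I" "x \<noteq> y"
      then obtain a b where "x = evec a" "y = evec b" "a \<noteq> b" by auto
      then show "ip I x y = 0" by (auto simp: ip_def evec_def intro!: sum.neutral)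
    qed (auto simp: supp_in_def evec_def fun_eq_iff)
    have "card (evec ` I) \<le> card (u ` D)"
      using fvs.independent_span_bound[OF _ ind sub] D by auto
    also have "\<dots> \<le> card D" by (rule card_image_le[OF D])
    also have "card (evec ` I) = card I"
      by (rule card_image) (auto simp: inj_on_def evec_def fun_eq_iff)
    finally show False using cD by simp
  qed
  then obtain i where i: "i \<in> I" "evec i \<notin> fvs.span (u ` D)" by blast
  define z where "z = evec i - (\<Sum>d\<in>D. (\<lambda>r. u d i * u d r))"
  have zsupp: "supp_in I z"
    using U i by (auto simp: z_def supp_in_def evec_def sum_fun_apply)
  have "z \<noteq> 0"
  proof
    assume "z = 0"
    then have "evec i = (\<Sum>d\<in>D. (\<lambda>r. u d i * u d r))" by (simp add: z_def)
    also have "\<dots> \<in> fvs.span (u ` D)"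
      by (intro fvs.span_sum fvs.span_scale fvs.span_base) auto
    finally show False using i by blast
  qed
  have zo: "ip I z (u d') = 0" if d': "d' \<in> D" for d'
  proof -
    have ee: "(\<lambda>r. (if r = i then 1 else 0) * u d' r) = (\<lambda>r. if r = i then u d' r else 0)" by auto
    have e: "ip I (evec i) (u d') = u d' i"
      using i I unfolding ip_def evec_def ee by simp
    have "ip I (\<Sum>d\<in>D. (\<lambda>r. u d i * u d r)) (u d') = (\<Sum>d\<in>D. u d i * ip I (u d) (u d'))"
      by (simp add: ip_sum_left ip_scale_left)
    also have "\<dots> = u d' i * ip I (u d') (u d')"
      by (subst sum.remove[OF D d'], subst sum.neutral) (use O d' in auto)
    also have "\<dots> = u d' i" using U[OF d'] by simp
    finally show ?thesis unfolding z_def ip_diff_left e by simp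
  qed
  have zp: "ip I z z > 0" by (rule ip_pos[OF I zsupp \<open>z \<noteq> 0\<close>])
  define x where "x = (\<lambda>r. (1 / sqrt (ip I z z)) * z r)"
  have "ip I x x = (1 / sqrt (ip I z z))^2 * ip I z z"
    unfolding x_def ip_def by (simp add: sum_distrib_left sum_divide_distrib power2_eq_square algebra_simps)
  also have "\<dots> = 1" using zp by (simp add: power_divide)
  finally have "ip I x x = 1" .
  moreover have "supp_in I x" using zsupp by (simp add: x_def supp_in_def)
  moreover have "\<forall>d\<in>D. ip I x (u d) = 0" using zo unfolding x_def ip_scale_left by simp
  ultimately show ?thesis by blast
qed


definition Xs :: "'a set \<Rightarrow> (nat \<Rightarrow> 'a \<Rightarrow> real) \<Rightarrow> nat \<Rightarrow> ('a \<Rightarrow> real) set" where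
  "Xs I u k = {x. supp_in I x \<and> ip I x x = 1 \<and> (\<forall>d\<in>{1..k}. ip I x (u d) = 0)}"

definition Mv :: "'b set \<Rightarrow> ('a \<Rightarrow> 'b \<Rightarrow> real) \<Rightarrow> ('b \<Rightarrow> real) \<Rightarrow> 'a \<Rightarrow> real" where
  "Mv J M y = (\<lambda>r. \<Sum>c\<in>J. M r c * y c)"

definition Mtv :: "'a set \<Rightarrow> ('a \<Rightarrow> 'b \<Rightarrow> real) \<Rightarrow> ('a \<Rightarrow> real) \<Rightarrow> 'b \<Rightarrow> real" where
  "Mtv I M x = (\<lambda>c. \<Sum>r\<in>I. x r * M r c)"

definition bil :: "'a set \<Rightarrow> 'b set \<Rightarrow> ('a \<Rightarrow> 'b \<Rightarrow> real) \<Rightarrow> ('a \<Rightarrow> real) \<Rightarrow> ('b \<Rightarrow> real) \<Rightarrow> real" where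
  "bil I J M x y = (\<Sum>r\<in>I. \<Sum>c\<in>J. x r * M r c * y c)"

lemma bil_Mv: "bil I J M x y = ip I x (Mv J M y)"
  unfolding bil_def ip_def Mv_def by (simp add: sum_distrib_left mult.assoc)

lemma bil_Mtv: "bil I J M x y = ip J (Mtv I M x) y"
  unfolding bil_def ip_def Mtv_def by (simp add: sum_distrib_right sum.swap[of _ I])

lemma Xs_cong: "(\<And>d. d \<in> {1..k} \<Longrightarrow> u d = u' d) \<Longrightarrow> Xs I u k = Xs I u' k"
  unfolding Xs_def by auto

lemma Xs_mono: "k' \<le> k \<Longrightarrow> Xs I u k \<subseteq> Xs I u k'"
  unfolding Xs_def by auto

lemma cont_coord: "continuous_on S (\<lambda>x. x r :: real)"
  by (rule continuous_on_subset[OF continuous_on_product_coordinates]) auto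

lemma cont_ip: "continuous_on S (\<lambda>x. ip I x (w :: 'a \<Rightarrow> real))" "continuous_on S (\<lambda>x. ip I x x)"
  unfolding ip_def by (intro continuous_intros cont_coord)+

lemma Xs_compact:
  assumes I: "finite I" shows "compact (Xs I u k)"
proof -
  have box: "compact (PiE UNIV (\<lambda>i::'a. {-1..1::real}))"
    by (metis compactin_PiE compact_Icc compactin_euclidean_iff euclidean_product_topology)
  have cl: "closed (Xs I u k)"
  proof -
    have "Xs I u k = (\<Inter>r\<in>-I. {x. x r = 0}) \<inter> {x. ip I x x = 1} \<inter> (\<Inter>d\<in>{1..k}. {x. ip I x (u d) = 0})"
      unfolding Xs_def supp_in_def by auto
    moreover have "closed \<dots>"
      by (intro closed_Int closed_INT ballI closed_Collect_eq cont_ip cont_coord continuous_on_const)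
    ultimately show ?thesis by simp
  qed
  have sub: "Xs I u k \<subseteq> PiE UNIV (\<lambda>i::'a. {-1..1::real})"
  proof
    fix x assume x: "x \<in> Xs I u k"
    have "\<bar>x r\<bar> \<le> 1" for r
    proof (cases "r \<in> I")
      case True
      have "x r * x r \<le> ip I x x" unfolding ip_def
        by (rule member_le_sum) (use True I in auto)
      then have "(x r)^2 \<le> 1^2" using x by (simp add: Xs_def power2_eq_square)
      then show ?thesis by (metis abs_le_square_iff abs_one)
    next
      case False then show ?thesis using x by (simp add: Xs_def supp_in_def)
    qed
    then show "x \<in> PiE UNIV (\<lambda>i::'a. {-1..1::real})" by (auto simp: abs_le_iff)
  qed
  show ?thesis
    by (rule compact_Int_closed[OF box cl, THEN subst[of _ _ compact, rotated]]) (use sub in auto)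
qed

lemma first_order:
  assumes I: "finite I"
    and go: "\<And>d. d \<in> {1..k} \<Longrightarrow> ip I g (u d) = 0"
    and x0: "x0 \<in> Xs I u k"
    and mx: "\<And>x. x \<in> Xs I u k \<Longrightarrow> ip I x g \<le> ip I x0 g"
  shows "\<forall>r\<in>I. g r = ip I x0 g * x0 r"
proof -
  define s where "s = ip I x0 g"
  define g' where "g' = (\<lambda>r. if r \<in> I then g r else 0)"
  have ipg': "ip I g' z = ip I g z" "ip I z g' = ip I z g" for z
    unfolding ip_def g'_def by (auto intro!: sum.cong)
  have g'supp: "supp_in I g'" by (simp add: g'_def supp_in_def)
  have x0p: "supp_in I x0" "ip I x0 x0 = 1" using x0 by (auto simp: Xs_def)
  have s0: "s \<ge> 0"
  proof -
    have "(\<lambda>r. - x0 r) \<in> Xs I u k"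
      using x0 by (auto simp: Xs_def supp_in_def ip_def sum_negf)
    from mx[OF this] have "- s \<le> s" unfolding s_def ip_def by (simp add: sum_negf)
    then show ?thesis by simp
  qed
  have gg: "ip I g g \<le> s^2"
  proof (cases "g' = 0")
    case True
    then have "ip I g g = 0" using ipg'(1)[of g] ipg'(2)[of 0] by (simp add: ip_def)
    then show ?thesis by simp
  next
    case False
    have pos: "ip I g' g' > 0" by (rule ip_pos[OF I g'supp False])
    define x where "x = (\<lambda>r. (1 / sqrt (ip I g' g')) * g' r)"
    have "ip I x x = (1 / sqrt (ip I g' g'))^2 * ip I g' g'"
      unfolding x_def ip_def by (simp add: sum_distrib_left sum_divide_distrib power2_eq_square algebra_simps)
    also have "\<dots> = 1" using pos by (simp add: power_divide)
    finally have "ip I x x = 1" .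
    moreover have "supp_in I x" using g'supp by (simp add: x_def supp_in_def)
    moreover have "\<forall>d\<in>{1..k}. ip I x (u d) = 0" using go ipg' unfolding x_def ip_scale_left by simp
    ultimately have "x \<in> Xs I u k" by (simp add: Xs_def)
    from mx[OF this] have "ip I x g \<le> s" by (simp add: s_def)
    moreover have "ip I x g = sqrt (ip I g' g')"
    proof -
      have "ip I x g = (1 / sqrt (ip I g' g')) * ip I g' g'"
        unfolding x_def ip_scale_left ipg' ..
      also have "\<dots> = sqrt (ip I g' g')" using pos
        by (simp add: real_div_sqrt)
      finally show ?thesis .
    qed
    ultimately have "sqrt (ip I g' g') \<le> s" by simp
    then have "ip I g' g' \<le> s^2" using pos s0
      by (metis less_eq_real_def real_sqrt_le_iff real_sqrt_unique)
    then show ?thesis using ipg'(1)[of g'] ipg'(2)[of g] by simp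
  qed
  define e where "e = (\<lambda>r. g r - s * x0 r)"
  have ee: "e r * e r = g r * g r - 2 * s * (x0 r * g r) + s^2 * (x0 r * x0 r)" for r
    unfolding e_def by (simp add: power2_eq_square algebra_simps)
  have "ip I e e = ip I g g - 2 * s * ip I x0 g + s^2 * ip I x0 x0"
    unfolding ip_def ee by (simp add: sum.distrib sum_subtractf sum_distrib_left)
  also have "\<dots> = ip I g g - s^2" using x0p by (simp add: s_def power2_eq_square)
  finally have "ip I e e \<le> 0" using gg by simp
  then have "ip I e e = 0" using ip_nonneg[of I e] by simp
  then have "\<forall>r\<in>I. e r * e r = 0"
    unfolding ip_def using sum_nonneg_eq_0_iff[OF I, of "\<lambda>r. e r * e r"] by simp
  then show ?thesis by (simp add: e_def s_def)
qed



lemma cont_fst_coord: "continuous_on S (\<lambda>p. fst p r :: real)"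
  using continuous_on_compose[OF continuous_on_fst[OF continuous_on_id] cont_coord, of S r] by (simp add: o_def)
lemma cont_snd_coord: "continuous_on S (\<lambda>p. snd p r :: real)"
  using continuous_on_compose[OF continuous_on_snd[OF continuous_on_id] cont_coord, of S r] by (simp add: o_def)

definition pinv where
  "pinv I J M k \<sigma> u v \<longleftrightarrow>
    (\<forall>d\<in>{1..k}. \<sigma> d \<ge> 0 \<and> supp_in I (u d) \<and> supp_in J (v d) \<and>
        (\<forall>r\<in>I. Mv J M (v d) r = \<sigma> d * u d r) \<and> (\<forall>c\<in>J. Mtv I M (u d) c = \<sigma> d * v d c)) \<and>
    (\<forall>d\<in>{1..k}. \<forall>d'\<in>{1..k}. ip I (u d) (u d') = (if d = d' then 1 else 0) \<and>
                              ip J (v d) (v d') = (if d = d' then 1 else 0)) \<and>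
    (\<forall>d\<in>{1..k}. \<forall>x\<in>Xs I u (d - 1). \<forall>y\<in>Xs J v (d - 1). bil I J M x y \<le> \<sigma> d)"

lemma pinv_step:
  assumes I: "finite I" and J: "finite J" and kI: "k < card I" and kJ: "k < card J"
    and P: "pinv I J M k \<sigma> u v"
  shows "\<exists>\<sigma>' u' v'. pinv I J M (Suc k) \<sigma>' u' v' \<and> (\<forall>d\<in>{1..k}. \<sigma>' d = \<sigma> d)"
proof -
  from P have P1: "\<And>d. d\<in>{1..k} \<Longrightarrow> \<sigma> d \<ge> 0 \<and> supp_in I (u d) \<and> supp_in J (v d) \<and>
        (\<forall>r\<in>I. Mv J M (v d) r = \<sigma> d * u d r) \<and> (\<forall>c\<in>J. Mtv I M (u d) c = \<sigma> d * v d c)"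
    and P2: "\<And>d d'. d\<in>{1..k} \<Longrightarrow> d'\<in>{1..k} \<Longrightarrow> ip I (u d) (u d') = (if d = d' then 1 else 0) \<and>
                              ip J (v d) (v d') = (if d = d' then 1 else 0)"
    and P3: "\<And>d. d\<in>{1..k} \<Longrightarrow> \<forall>x\<in>Xs I u (d - 1). \<forall>y\<in>Xs J v (d - 1). bil I J M x y \<le> \<sigma> d"
    unfolding pinv_def by blast+
  have "\<exists>x. supp_in I x \<and> ip I x x = 1 \<and> (\<forall>d\<in>{1..k}. ip I x (u d) = 0)"
    by (rule exists_orth[OF I]) (use P1 P2 kI in auto)
  then have XI: "Xs I u k \<noteq> {}" by (auto simp: Xs_def)
  have "\<exists>x. supp_in J x \<and> ip J x x = 1 \<and> (\<forall>d\<in>{1..k}. ip J x (v d) = 0)"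
    by (rule exists_orth[OF J]) (use P1 P2 kJ in auto)
  then have YJ: "Xs J v k \<noteq> {}" by (auto simp: Xs_def)
  have cpt: "compact (Xs I u k \<times> Xs J v k)"
    by (intro compact_Times Xs_compact I J)
  have cont: "continuous_on (Xs I u k \<times> Xs J v k) (\<lambda>p. bil I J M (fst p) (snd p))"
    unfolding bil_def
    by (intro continuous_on_sum continuous_on_mult continuous_on_const cont_fst_coord cont_snd_coord)
  obtain p where p: "p \<in> Xs I u k \<times> Xs J v k"
     and pmax: "\<forall>q\<in>Xs I u k \<times> Xs J v k. bil I J M (fst q) (snd q) \<le> bil I J M (fst p) (snd p)"
    using continuous_attains_sup[OF cpt _ cont] XI YJ by blast
  define x where "x = fst p"
  define y where "y = snd p"
  define s where "s = bil I J M x y"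
  have x: "x \<in> Xs I u k" and y: "y \<in> Xs J v k" using p by (auto simp: x_def y_def)
  have mx: "\<And>x' y'. x' \<in> Xs I u k \<Longrightarrow> y' \<in> Xs J v k \<Longrightarrow> bil I J M x' y' \<le> s"
    using pmax by (force simp: s_def x_def y_def)
  have s0: "s \<ge> 0"
  proof -
    have "(\<lambda>r. - x r) \<in> Xs I u k"
      using x by (auto simp: Xs_def supp_in_def ip_def sum_negf)
    from mx[OF this y] have "- s \<le> s" unfolding s_def bil_def by (simp add: sum_negf)
    then show ?thesis by simp
  qed
  have g_orth: "ip I (Mv J M y) (u d) = 0" if d: "d \<in> {1..k}" for d
  proof -
    have "ip I (Mv J M y) (u d) = bil I J M (u d) y" by (simp add: bil_Mv ip_sym)
    also have "\<dots> = ip J (Mtv I M (u d)) y" by (rule bil_Mtv)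
    also have "\<dots> = ip J (\<lambda>c. \<sigma> d * v d c) y" unfolding ip_def using P1[OF d] by simp
    also have "\<dots> = \<sigma> d * ip J y (v d)" by (simp add: ip_scale_left ip_sym)
    also have "\<dots> = 0" using y d by (simp add: Xs_def)
    finally show ?thesis .
  qed
  have h_orth: "ip J (Mtv I M x) (v d) = 0" if d: "d \<in> {1..k}" for d
  proof -
    have "ip J (Mtv I M x) (v d) = bil I J M x (v d)" by (simp add: bil_Mtv)
    also have "\<dots> = ip I x (Mv J M (v d))" by (rule bil_Mv)
    also have "\<dots> = ip I x (\<lambda>r. \<sigma> d * u d r)" unfolding ip_def using P1[OF d] by simp
    also have "\<dots> = \<sigma> d * ip I x (u d)" unfolding ip_def by (simp add: sum_distrib_left mult.left_commute)
    also have "\<dots> = 0" using x d by (simp add: Xs_def)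
    finally show ?thesis .
  qed
  have gx: "\<forall>r\<in>I. Mv J M y r = s * x r"
  proof -
    have "\<forall>r\<in>I. Mv J M y r = ip I x (Mv J M y) * x r"
      by (rule first_order[OF I _ x]) (use g_orth mx y in \<open>auto simp: bil_Mv ip_sym s_def\<close>)
    then show ?thesis by (simp add: s_def bil_Mv)
  qed
  have hy: "\<forall>c\<in>J. Mtv I M x c = s * y c"
  proof -
    have "\<forall>c\<in>J. Mtv I M x c = ip J y (Mtv I M x) * y c"
      by (rule first_order[OF J _ y]) (use h_orth mx x in \<open>auto simp: bil_Mtv ip_sym s_def\<close>)
    then show ?thesis by (simp add: s_def bil_Mtv ip_sym)
  qed
  define \<sigma>' where "\<sigma>' = \<sigma>(Suc k := s)"
  define u' where "u' = u(Suc k := x)"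
  define v' where "v' = v(Suc k := y)"
  have XsI: "Xs I u' j = Xs I u j" if "j \<le> k" for j
    by (rule Xs_cong) (use that in \<open>auto simp: u'_def\<close>)
  have XsJ: "Xs J v' j = Xs J v j" if "j \<le> k" for j
    by (rule Xs_cong) (use that in \<open>auto simp: v'_def\<close>)
  have C1: "\<sigma>' d \<ge> 0 \<and> supp_in I (u' d) \<and> supp_in J (v' d) \<and>
        (\<forall>r\<in>I. Mv J M (v' d) r = \<sigma>' d * u' d r) \<and> (\<forall>c\<in>J. Mtv I M (u' d) c = \<sigma>' d * v' d c)"
    if d: "d \<in> {1..Suc k}" for d
    proof (cases "d = Suc k")
      case True then show ?thesis using s0 x y gx hy by (simp add: \<sigma>'_def u'_def v'_def Xs_def)
    next
      case False then have "d \<in> {1..k}" using d by auto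
      then show ?thesis using P1 False by (simp add: \<sigma>'_def u'_def v'_def)
    qed
  have C2: "ip I (u' d) (u' d') = (if d = d' then 1 else 0) \<and> ip J (v' d) (v' d') = (if d = d' then 1 else 0)"
    if d: "d \<in> {1..Suc k}" and d': "d' \<in> {1..Suc k}" for d d'
    proof (cases "d = Suc k"; cases "d' = Suc k")
      assume "d = Suc k" "d' = Suc k" then show ?thesis using x y by (simp add: u'_def v'_def Xs_def)
    next
      assume a: "d = Suc k" "d' \<noteq> Suc k"
      then have "d' \<in> {1..k}" using d' by auto
      then show ?thesis using x y a by (simp add: u'_def v'_def Xs_def)
    next
      assume a: "d \<noteq> Suc k" "d' = Suc k"
      then have "d \<in> {1..k}" using d by auto
      then show ?thesis using x y a by (simp add: u'_def v'_def Xs_def ip_sym)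
    next
      assume a: "d \<noteq> Suc k" "d' \<noteq> Suc k"
      then have "d \<in> {1..k}" "d' \<in> {1..k}" using d d' by auto
      then show ?thesis using P2 a by (simp add: u'_def v'_def)
    qed
  have C3: "bil I J M x' y' \<le> \<sigma>' d"
    if d: "d \<in> {1..Suc k}" and x': "x' \<in> Xs I u' (d - 1)" and y': "y' \<in> Xs J v' (d - 1)" for d x' y'
  proof -
    have dk: "d - 1 \<le> k" using d by auto
    show "bil I J M x' y' \<le> \<sigma>' d"
    proof (cases "d = Suc k")
      case True then show ?thesis using mx x' y' XsI[OF dk] XsJ[OF dk] by (simp add: \<sigma>'_def)
    next
      case False then have "d \<in> {1..k}" using d by auto
      then show ?thesis using P3 False x' y' XsI[OF dk] XsJ[OF dk] by (simp add: \<sigma>'_def)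
    qed
  qed
  have "pinv I J M (Suc k) \<sigma>' u' v'"
    unfolding pinv_def using C1 C2 C3 by blast
  moreover have "\<forall>d\<in>{1..k}. \<sigma>' d = \<sigma> d" by (simp add: \<sigma>'_def)
  ultimately show ?thesis by blast
qed



lemma sum_kron:
  assumes "finite D" "d' \<in> D" "\<And>d. d \<in> D \<Longrightarrow> K d = (if d = d' then 1 else 0)"
  shows "(\<Sum>d\<in>D. f d * K d) = (f d' :: real)"
proof -
  have "(\<Sum>d\<in>D. f d * K d) = (\<Sum>d\<in>D. if d = d' then f d else 0)"
    by (rule sum.cong) (use assms(3) in auto)
  also have "\<dots> = f d'" using assms(1,2) by simp
  finally show ?thesis .
qed

lemma pinv_exists:
  assumes I: "finite I" and J: "finite J"
  shows "k \<le> min (card I) (card J) \<Longrightarrow> \<exists>\<sigma> u v. pinv I J M k \<sigma> u v"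
proof (induction k)
  case 0 then show ?case by (auto simp: pinv_def)
next
  case (Suc k)
  then obtain \<sigma> u v where "pinv I J M k \<sigma> u v" by auto
  from pinv_step[OF I J _ _ this] Suc.prems show ?case by auto
qed

lemma complete_zero:
  assumes I: "finite I" and k: "card I = k"
    and U: "\<And>d. d \<in> {1..k} \<Longrightarrow> supp_in I (u d)"
    and O: "\<And>d d'. d \<in> {1..k} \<Longrightarrow> d' \<in> {1..k} \<Longrightarrow> ip I (u d) (u d') = (if d = d' then 1 else 0)"
    and z: "\<And>d. d \<in> {1..k} \<Longrightarrow> ip I z (u d) = 0"
  shows "\<forall>r\<in>I. z r = 0"
proof (rule ccontr)
  assume "\<not> ?thesis"
  then obtain r0 where r0: "r0 \<in> I" "z r0 \<noteq> 0" by auto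
  define z' where "z' = (\<lambda>r. if r \<in> I then z r else 0)"
  have z'supp: "supp_in I z'" by (simp add: z'_def supp_in_def)
  have z'0: "z' \<noteq> 0" using r0 by (auto simp: z'_def fun_eq_iff)
  have ipz': "ip I z' w = ip I z w" for w unfolding ip_def z'_def by (auto intro!: sum.cong)
  have u0: "u d \<noteq> 0" if "d \<in> {1..k}" for d using O[OF that that] by (auto simp: ip_def)
  have inj: "inj_on u {1..k}"
    by (rule inj_onI) (metis O zero_neq_one)
  have notin: "z' \<notin> u ` {1..k}"
  proof
    assume "z' \<in> u ` {1..k}"
    then obtain d where "d \<in> {1..k}" "z' = u d" by auto
    then have "ip I z' z' = 0" using z ipz' by metis
    with ip_pos[OF I z'supp z'0] show False by simp
  qed
  have "finite (insert z' (u ` {1..k})) \<and> card (insert z' (u ` {1..k})) \<le> card I"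
  proof (rule ortho_card[OF I])
    fix x assume "x \<in> insert z' (u ` {1..k})"
    then show "supp_in I x \<and> x \<noteq> 0" using z'supp z'0 U u0 by auto
  next
    fix x y assume x: "x \<in> insert z' (u ` {1..k})" and y: "y \<in> insert z' (u ` {1..k})" and xy: "x \<noteq> y"
    show "ip I x y = 0"
    proof -
      { fix d assume "d \<in> {1..k}" then have "ip I z' (u d) = 0" using z ipz' by simp }
      note zz = this
      show ?thesis using x y xy zz O by (auto simp: ip_sym)
    qed
  qed
  moreover have "card (insert z' (u ` {1..k})) = Suc k"
    using notin card_image[OF inj] by simp
  ultimately show False using k by simp
qed

definition svd_rep where
  "svd_rep I J M k \<sigma> u v \<longleftrightarrow>
     (\<forall>d\<in>{1..k}. \<sigma> d \<ge> 0) \<and>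
     (\<forall>d\<in>{1..<k}. \<sigma> (Suc d) \<le> \<sigma> d) \<and>
     (\<forall>d\<in>{1..k}. \<forall>d'\<in>{1..k}.
                 ip I (u d) (u d') = (if d = d' then 1 else 0) \<and>
                 ip J (v d) (v d') = (if d = d' then 1 else 0)) \<and>
     (\<forall>r\<in>I. \<forall>c\<in>J. M r c = (\<Sum>d\<in>{1..k}. \<sigma> d * u d r * v d c))"

lemma svd_exists:
  assumes I: "finite I" and J: "finite J"
  shows "\<exists>\<sigma> u v. svd_rep I J M (min (card I) (card J)) \<sigma> u v"
proof -
  define k where "k = min (card I) (card J)"
  obtain \<sigma> u v where P: "pinv I J M k \<sigma> u v" using pinv_exists[OF I J, of k M] by (auto simp: k_def)
  from P have P1: "\<And>d. d\<in>{1..k} \<Longrightarrow> \<sigma> d \<ge> 0 \<and> supp_in I (u d) \<and> supp_in J (v d) \<and>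
        (\<forall>r\<in>I. Mv J M (v d) r = \<sigma> d * u d r) \<and> (\<forall>c\<in>J. Mtv I M (u d) c = \<sigma> d * v d c)"
    and P2: "\<And>d d'. d\<in>{1..k} \<Longrightarrow> d'\<in>{1..k} \<Longrightarrow> ip I (u d) (u d') = (if d = d' then 1 else 0) \<and>
                              ip J (v d) (v d') = (if d = d' then 1 else 0)"
    and P3: "\<And>d. d\<in>{1..k} \<Longrightarrow> \<forall>x\<in>Xs I u (d - 1). \<forall>y\<in>Xs J v (d - 1). bil I J M x y \<le> \<sigma> d"
    unfolding pinv_def by blast+
  have sb: "bil I J M (u d) (v d) = \<sigma> d" if d: "d \<in> {1..k}" for d
  proof -
    have "bil I J M (u d) (v d) = ip I (u d) (\<lambda>r. \<sigma> d * u d r)"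
      unfolding bil_Mv ip_def using P1[OF d] by simp
    also have "\<dots> = \<sigma> d * ip I (u d) (u d)" unfolding ip_def by (simp add: sum_distrib_left mult.left_commute)
    also have "\<dots> = \<sigma> d" using P2[OF d d] by simp
    finally show ?thesis .
  qed
  have dec: "\<sigma> (Suc d) \<le> \<sigma> d" if d: "d \<in> {1..<k}" for d
  proof -
    have d1: "Suc d \<in> {1..k}" "d \<in> {1..k}" using d by auto
    have "u (Suc d) \<in> Xs I u (d - 1)"
      using P1[OF d1(1)] P2[OF d1(1)] d by (auto simp: Xs_def)
    moreover have "v (Suc d) \<in> Xs J v (d - 1)"
      using P1[OF d1(1)] P2[OF d1(1)] d by (auto simp: Xs_def)
    ultimately have "bil I J M (u (Suc d)) (v (Suc d)) \<le> \<sigma> d" using P3[OF d1(2)] by blast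
    then show ?thesis using sb[OF d1(1)] by simp
  qed
  have dec_rep: "\<forall>r\<in>I. \<forall>c\<in>J. M r c = (\<Sum>d\<in>{1..k}. \<sigma> d * u d r * v d c)"
  proof (cases "k = card I")
    case True
    show ?thesis
    proof (intro ballI)
      fix r c assume r: "r \<in> I" and c: "c \<in> J"
      define z where "z = (\<lambda>r. M r c - (\<Sum>d\<in>{1..k}. \<sigma> d * u d r * v d c))"
      have "ip I z (u d') = 0" if d': "d' \<in> {1..k}" for d'
      proof -
        have "ip I z (u d') = Mtv I M (u d') c - (\<Sum>d\<in>{1..k}. \<sigma> d * v d c * ip I (u d) (u d'))"
          unfolding z_def ip_def Mtv_def
          by (simp add: sum_subtractf left_diff_distrib sum_distrib_left sum_distrib_right sum.swap[of _ I] algebra_simps)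
        also have "(\<Sum>d\<in>{1..k}. \<sigma> d * v d c * ip I (u d) (u d')) = \<sigma> d' * v d' c"
          by (rule sum_kron) (use P2 d' in auto)
        finally show ?thesis using P1[OF d'] c by simp
      qed
      from complete_zero[OF I True[symmetric], of u z] this P1 P2 r
      show "M r c = (\<Sum>d\<in>{1..k}. \<sigma> d * u d r * v d c)" by (auto simp: z_def)
    qed
  next
    case False
    then have True: "k = card J" by (simp add: k_def min_def split: if_splits)
    show ?thesis
    proof (intro ballI)
      fix r c assume r: "r \<in> I" and c: "c \<in> J"
      define z where "z = (\<lambda>c. M r c - (\<Sum>d\<in>{1..k}. \<sigma> d * u d r * v d c))"
      have "ip J z (v d') = 0" if d': "d' \<in> {1..k}" for d'
      proof -
        have "ip J z (v d') = Mv J M (v d') r - (\<Sum>d\<in>{1..k}. \<sigma> d * u d r * ip J (v d) (v d'))"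
          unfolding z_def ip_def Mv_def
          by (simp add: sum_subtractf left_diff_distrib sum_distrib_left sum_distrib_right sum.swap[of _ J] algebra_simps)
        also have "(\<Sum>d\<in>{1..k}. \<sigma> d * u d r * ip J (v d) (v d')) = \<sigma> d' * u d' r"
          by (rule sum_kron) (use P2 d' in auto)
        finally show ?thesis using P1[OF d'] r by simp
      qed
      from complete_zero[OF J True[symmetric], of v z] this P1 P2 c
      show "M r c = (\<Sum>d\<in>{1..k}. \<sigma> d * u d r * v d c)" by (auto simp: z_def)
    qed
  qed
  have "svd_rep I J M k \<sigma> u v"
    unfolding svd_rep_def using P1 P2 dec dec_rep by blast
  then show ?thesis by (auto simp: k_def)
qed


lemma ip_lin_comb: "ip J (\<lambda>c. \<Sum>d\<in>D. g d * f d c) y = (\<Sum>d\<in>D. g d * ip J (f d) y)"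
  unfolding ip_def by (simp add: sum_distrib_right sum_distrib_left sum.swap[of _ J] mult.assoc)

lemma ip_lin_comb2: "ip J y (\<lambda>c. \<Sum>d\<in>D. g d * f d c) = (\<Sum>d\<in>D. g d * ip J y (f d))"
  unfolding ip_def by (simp add: sum_distrib_right sum_distrib_left sum.swap[of _ J] mult.left_commute)

lemma parseval:
  assumes D: "finite D"
    and O: "\<And>d d'. d \<in> D \<Longrightarrow> d' \<in> D \<Longrightarrow> ip J (f d) (f d') = (if d = d' then 1 else 0)"
  shows "ip J (\<lambda>c. \<Sum>d\<in>D. g d * f d c) (\<lambda>c. \<Sum>d\<in>D. g d * f d c) = (\<Sum>d\<in>D. (g d)^2)"
proof -
  have "ip J (\<lambda>c. \<Sum>d\<in>D. g d * f d c) (\<lambda>c. \<Sum>d\<in>D. g d * f d c)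
      = (\<Sum>d\<in>D. g d * (\<Sum>d'\<in>D. g d' * ip J (f d) (f d')))"
    by (simp add: ip_lin_comb ip_lin_comb2)
  also have "\<dots> = (\<Sum>d\<in>D. g d * g d)"
    by (rule sum.cong[OF refl], subst sum_kron[OF D]) (use O in auto)
  finally show ?thesis by (simp add: power2_eq_square)
qed

lemma ip_expand: "ip J (\<lambda>c. x c - z c) (\<lambda>c. x c - z c) = ip J x x - 2 * ip J x z + ip J z z"
  unfolding ip_def by (simp add: sum_subtractf sum.distrib algebra_simps sum_distrib_left)

lemma proj_eq:
  assumes D: "finite D"
    and O: "\<And>d d'. d \<in> D \<Longrightarrow> d' \<in> D \<Longrightarrow> ip J (f d) (f d') = (if d = d' then 1 else 0)"
  shows "ip J (\<lambda>c. m c - (\<Sum>d\<in>D. \<beta> d * f d c)) (\<lambda>c. m c - (\<Sum>d\<in>D. \<beta> d * f d c))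
     = ip J m m - 2 * (\<Sum>d\<in>D. \<beta> d * ip J m (f d)) + (\<Sum>d\<in>D. (\<beta> d)^2)"
proof -
  have pz: "ip J (\<lambda>c. \<Sum>d\<in>D. \<beta> d * f d c) (\<lambda>c. \<Sum>d\<in>D. \<beta> d * f d c) = (\<Sum>d\<in>D. (\<beta> d)^2)"
    by (rule parseval) (use D O in auto)
  have eq1: "ip J (\<lambda>c. m c - (\<Sum>d\<in>D. \<beta> d * f d c)) (\<lambda>c. m c - (\<Sum>d\<in>D. \<beta> d * f d c))
     = ip J m m - 2 * ip J m (\<lambda>c. \<Sum>d\<in>D. \<beta> d * f d c) + ip J (\<lambda>c. \<Sum>d\<in>D. \<beta> d * f d c) (\<lambda>c. \<Sum>d\<in>D. \<beta> d * f d c)"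
    by (rule ip_expand)
  have eq2: "ip J m (\<lambda>c. \<Sum>d\<in>D. \<beta> d * f d c) = (\<Sum>d\<in>D. \<beta> d * ip J m (f d))"
    by (rule ip_lin_comb2)
  show ?thesis using eq1 eq2 pz by linarith
qed

lemma proj_ineq:
  assumes D: "finite D"
    and O: "\<And>d d'. d \<in> D \<Longrightarrow> d' \<in> D \<Longrightarrow> ip J (f d) (f d') = (if d = d' then 1 else 0)"
  shows "ip J (\<lambda>c. m c - (\<Sum>d\<in>D. \<beta> d * f d c)) (\<lambda>c. m c - (\<Sum>d\<in>D. \<beta> d * f d c))
          \<ge> ip J m m - (\<Sum>d\<in>D. (ip J m (f d))^2)"
proof -
  have e: "ip J (\<lambda>c. m c - (\<Sum>d\<in>D. \<beta> d * f d c)) (\<lambda>c. m c - (\<Sum>d\<in>D. \<beta> d * f d c))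
     = ip J m m - 2 * (\<Sum>d\<in>D. \<beta> d * ip J m (f d)) + (\<Sum>d\<in>D. (\<beta> d)^2)"
    by (rule proj_eq) (use D O in auto)
  moreover have "0 \<le> (\<Sum>d\<in>D. (\<beta> d - ip J m (f d))^2)" by (simp add: sum_nonneg)
  moreover have "(\<Sum>d\<in>D. (\<beta> d - ip J m (f d))^2)
      = (\<Sum>d\<in>D. (\<beta> d)^2) - 2 * (\<Sum>d\<in>D. \<beta> d * ip J m (f d)) + (\<Sum>d\<in>D. (ip J m (f d))^2)"
    by (simp add: power2_diff sum.distrib sum_subtractf sum_distrib_left mult.assoc)
  ultimately show ?thesis by linarith
qed

lemma bessel:
  assumes D: "finite D"
    and O: "\<And>d d'. d \<in> D \<Longrightarrow> d' \<in> D \<Longrightarrow> ip J (f d) (f d') = (if d = d' then 1 else 0)"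
  shows "(\<Sum>d\<in>D. (ip J x (f d))^2) \<le> ip J x x"
proof -
  have a: "ip J (\<lambda>c. x c - (\<Sum>d\<in>D. ip J x (f d) * f d c)) (\<lambda>c. x c - (\<Sum>d\<in>D. ip J x (f d) * f d c))
     = ip J x x - 2 * (\<Sum>d\<in>D. ip J x (f d) * ip J x (f d)) + (\<Sum>d\<in>D. (ip J x (f d))^2)"
    by (rule proj_eq) (use D O in auto)
  have b: "0 \<le> ip J (\<lambda>c. x c - (\<Sum>d\<in>D. ip J x (f d) * f d c)) (\<lambda>c. x c - (\<Sum>d\<in>D. ip J x (f d) * f d c))"
    by (rule ip_nonneg)
  from a b show ?thesis by (simp add: power2_eq_square)
qed

lemma rearrange:
  fixes h w :: "nat \<Rightarrow> real"
  assumes hdec: "\<And>d. d \<in> {1..<k} \<Longrightarrow> h (Suc d) \<le> h d"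
    and h0: "\<And>d. d \<in> {1..k} \<Longrightarrow> h d \<ge> 0"
    and w: "\<And>d. d \<in> {1..k} \<Longrightarrow> 0 \<le> w d \<and> w d \<le> 1"
    and ws: "(\<Sum>d\<in>{1..k}. w d) \<le> real R"
  shows "(\<Sum>d\<in>{Suc R..k}. h d) \<le> (\<Sum>d\<in>{1..k}. h d * (1 - w d))"
proof (cases "R < k")
  case False
  then have "{Suc R..k} = {}" by auto
  then show ?thesis using h0 w by (simp, intro sum_nonneg mult_nonneg_nonneg) auto
next
  case True
  have mono: "h e \<le> h d" if "1 \<le> d" "d \<le> e" "e \<le> k" for d e
    using that
  proof (induction e)
    case 0 then show ?case by simp
  next
    case (Suc e)
    show ?case
    proof (cases "d = Suc e")
      case True then show ?thesis by simp
    next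
      case False
      then have "h e \<le> h d" using Suc by auto
      moreover have "h (Suc e) \<le> h e" using hdec[of e] Suc False by auto
      ultimately show ?thesis by simp
    qed
  qed
  have R1: "R \<ge> 1 \<or> R = 0" by auto
  have split: "{1..k} = {1..R} \<union> {Suc R..k}" "{1..R} \<inter> {Suc R..k} = {}" using True by auto
  have S1: "(\<Sum>d\<in>{1..k}. h d * (1 - w d)) = (\<Sum>d\<in>{1..R}. h d * (1 - w d)) + (\<Sum>d\<in>{Suc R..k}. h d * (1 - w d))"
    unfolding split(1) by (rule sum.union_disjoint) (use split(2) in auto)
  have S2: "(\<Sum>d\<in>{1..k}. w d) = (\<Sum>d\<in>{1..R}. w d) + (\<Sum>d\<in>{Suc R..k}. w d)"
    unfolding split(1) by (rule sum.union_disjoint) (use split(2) in auto)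
  show ?thesis
  proof (cases "R = 0")
    case True
    have "0 \<le> (\<Sum>d\<in>{1..k}. w d)" by (rule sum_nonneg) (use w in auto)
    then have "(\<Sum>d\<in>{1..k}. w d) = 0" using ws True by simp
    then have w0: "\<forall>d\<in>{1..k}. w d = 0" using w by (subst sum_nonneg_eq_0_iff[symmetric]) auto
    have "(\<Sum>d\<in>{1..k}. h d * (1 - w d)) = (\<Sum>d\<in>{1..k}. h d)"
      by (rule sum.cong) (use w0 in auto)
    then show ?thesis using True by simp
  next
    case False
    then have R1: "1 \<le> R" by simp
    define hR where "hR = h R"
    have a: "(\<Sum>d\<in>{1..R}. h d * (1 - w d)) \<ge> (\<Sum>d\<in>{1..R}. hR * (1 - w d))"
      by (rule sum_mono) (use mono w True in \<open>auto simp: hR_def intro!: mult_right_mono\<close>)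
    have b: "(\<Sum>d\<in>{Suc R..k}. h d * w d) \<le> (\<Sum>d\<in>{Suc R..k}. hR * w d)"
      by (rule sum_mono) (use mono w True R1 in \<open>auto simp: hR_def intro!: mult_right_mono\<close>)
    have c: "(\<Sum>d\<in>{1..R}. hR * (1 - w d)) = hR * (real R - (\<Sum>d\<in>{1..R}. w d))"
      by (simp add: sum_distrib_left[symmetric] sum_subtractf)
    have d: "(\<Sum>d\<in>{Suc R..k}. hR * w d) = hR * (\<Sum>d\<in>{Suc R..k}. w d)"
      by (simp add: sum_distrib_left)
    have hR0: "hR \<ge> 0" using h0[of R] R1 True by (simp add: hR_def)
    have e: "hR * (real R - (\<Sum>d\<in>{1..R}. w d)) - hR * (\<Sum>d\<in>{Suc R..k}. w d) \<ge> 0"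
      using S2 ws hR0 by (simp add: right_diff_distrib[symmetric])
    have f: "(\<Sum>d\<in>{Suc R..k}. h d * (1 - w d)) = (\<Sum>d\<in>{Suc R..k}. h d) - (\<Sum>d\<in>{Suc R..k}. h d * w d)"
      by (simp add: right_diff_distrib sum_subtractf)
    show ?thesis using S1 a b c d e f by linarith
  qed
qed


lemma ip_cong: "(\<And>r. r \<in> I \<Longrightarrow> x r = x' r) \<Longrightarrow> (\<And>r. r \<in> I \<Longrightarrow> y r = y' r) \<Longrightarrow> ip I x y = ip I x' y'"
  unfolding ip_def by (auto intro!: sum.cong)

lemma svd_repD:
  assumes "svd_rep I J M k \<sigma> u v"
  shows "\<And>d. d \<in> {1..k} \<Longrightarrow> \<sigma> d \<ge> 0"
    and "\<And>d. d \<in> {1..<k} \<Longrightarrow> \<sigma> (Suc d) \<le> \<sigma> d"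
    and "\<And>d d'. d \<in> {1..k} \<Longrightarrow> d' \<in> {1..k} \<Longrightarrow> ip I (u d) (u d') = (if d = d' then 1 else 0)"
    and "\<And>d d'. d \<in> {1..k} \<Longrightarrow> d' \<in> {1..k} \<Longrightarrow> ip J (v d) (v d') = (if d = d' then 1 else 0)"
    and "\<And>r c. r \<in> I \<Longrightarrow> c \<in> J \<Longrightarrow> M r c = (\<Sum>d\<in>{1..k}. \<sigma> d * u d r * v d c)"
  using assms unfolding svd_rep_def by blast+

lemma svd_frob:
  assumes S: "svd_rep I J M k \<sigma> u v"
  shows "(\<Sum>r\<in>I. \<Sum>c\<in>J. (M r c)^2) = (\<Sum>e\<in>{1..k}. (\<sigma> e)^2)"
proof -
  note SD = svd_repD[OF S]
  have col: "(\<Sum>r\<in>I. (M r c)^2) = (\<Sum>e\<in>{1..k}. (\<sigma> e * v e c)^2)" if c: "c \<in> J" for c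
  proof -
    have "(\<Sum>r\<in>I. (M r c)^2) = ip I (\<lambda>r. M r c) (\<lambda>r. M r c)" by (simp add: ip_def power2_eq_square)
    also have "\<dots> = ip I (\<lambda>r. \<Sum>e\<in>{1..k}. (\<sigma> e * v e c) * u e r) (\<lambda>r. \<Sum>e\<in>{1..k}. (\<sigma> e * v e c) * u e r)"
      by (rule ip_cong) (use SD(5) c in \<open>auto simp: algebra_simps\<close>)
    also have "\<dots> = (\<Sum>e\<in>{1..k}. (\<sigma> e * v e c)^2)"
      by (rule parseval) (use SD(3) in auto)
    finally show ?thesis .
  qed
  have "(\<Sum>r\<in>I. \<Sum>c\<in>J. (M r c)^2) = (\<Sum>c\<in>J. \<Sum>r\<in>I. (M r c)^2)" by (rule sum.swap)
  also have "\<dots> = (\<Sum>c\<in>J. \<Sum>e\<in>{1..k}. (\<sigma> e * v e c)^2)" by (rule sum.cong) (use col in auto)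
  also have "\<dots> = (\<Sum>e\<in>{1..k}. (\<sigma> e)^2 * ip J (v e) (v e))"
    by (subst sum.swap) (simp add: ip_def power_mult_distrib sum_distrib_left power2_eq_square mult.commute mult.left_commute)
  also have "\<dots> = (\<Sum>e\<in>{1..k}. (\<sigma> e)^2)" by (rule sum.cong) (use SD(4) in auto)
  finally show ?thesis .
qed

lemma svd_Mv:
  assumes S: "svd_rep I J M k \<sigma> u v"
  shows "(\<Sum>r\<in>I. (\<Sum>c\<in>J. M r c * b c)^2) = (\<Sum>e\<in>{1..k}. (\<sigma> e)^2 * (ip J (v e) b)^2)"
proof -
  note SD = svd_repD[OF S]
  have "(\<Sum>r\<in>I. (\<Sum>c\<in>J. M r c * b c)^2) = ip I (\<lambda>r. \<Sum>c\<in>J. M r c * b c) (\<lambda>r. \<Sum>c\<in>J. M r c * b c)"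
    by (simp add: ip_def power2_eq_square)
  also have "\<dots> = ip I (\<lambda>r. \<Sum>e\<in>{1..k}. (\<sigma> e * ip J (v e) b) * u e r) (\<lambda>r. \<Sum>e\<in>{1..k}. (\<sigma> e * ip J (v e) b) * u e r)"
  proof (rule ip_cong)
    fix r assume r: "r \<in> I"
    have "(\<Sum>c\<in>J. M r c * b c) = (\<Sum>c\<in>J. \<Sum>e\<in>{1..k}. \<sigma> e * u e r * v e c * b c)"
      by (rule sum.cong) (use SD(5) r in \<open>auto simp: sum_distrib_right\<close>)
    also have "\<dots> = (\<Sum>e\<in>{1..k}. (\<sigma> e * ip J (v e) b) * u e r)"
      by (subst sum.swap) (simp add: ip_def sum_distrib_left sum_distrib_right algebra_simps)
    finally show "(\<Sum>c\<in>J. M r c * b c) = (\<Sum>e\<in>{1..k}. (\<sigma> e * ip J (v e) b) * u e r)" .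
    then show "(\<Sum>c\<in>J. M r c * b c) = (\<Sum>e\<in>{1..k}. (\<sigma> e * ip J (v e) b) * u e r)" .
  qed
  also have "\<dots> = (\<Sum>e\<in>{1..k}. (\<sigma> e * ip J (v e) b)^2)"
    by (rule parseval) (use SD(3) in auto)
  finally show ?thesis by (simp add: power_mult_distrib)
qed

lemma rank_le:
  assumes I: "finite I" and J: "finite J" and P: "finite P"
    and W: "\<And>r c. r \<in> I \<Longrightarrow> c \<in> J \<Longrightarrow> W r c = (\<Sum>p\<in>P. a p r * b p c)"
    and S: "svd_rep I J W k \<tau> a' b'"
  shows "card {d\<in>{1..k}. \<tau> d \<noteq> 0} \<le> card P"
proof -
  note SD = svd_repD[OF S]
  define T where "T = {d\<in>{1..k}. \<tau> d \<noteq> 0}"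
  define z where "z = (\<lambda>d c. if c \<in> J then b' d c else 0)"
  define B where "B = (\<lambda>p c. if c \<in> J then b p c else 0) ` P"
  have zip: "ip J (z d) (z d') = ip J (b' d) (b' d')" for d d'
    by (rule ip_cong) (auto simp: z_def)
  have tb: "\<tau> d * b' d c = (\<Sum>p\<in>P. ip I (a' d) (a p) * b p c)" if d: "d \<in> T" and c: "c \<in> J" for d c
  proof -
    have dk: "d \<in> {1..k}" using d by (simp add: T_def)
    have "(\<Sum>r\<in>I. a' d r * W r c) = (\<Sum>r\<in>I. \<Sum>e\<in>{1..k}. a' d r * (\<tau> e * a' e r * b' e c))"
      by (rule sum.cong) (use SD(5) c in \<open>auto simp: sum_distrib_left\<close>)
    also have "\<dots> = (\<Sum>e\<in>{1..k}. (\<tau> e * b' e c) * ip I (a' e) (a' d))"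
      by (subst sum.swap) (simp add: ip_def sum_distrib_left algebra_simps)
    also have "\<dots> = \<tau> d * b' d c"
      by (rule sum_kron) (use SD(3) dk in auto)
    finally have 1: "(\<Sum>r\<in>I. a' d r * W r c) = \<tau> d * b' d c" .
    have "(\<Sum>r\<in>I. a' d r * W r c) = (\<Sum>r\<in>I. \<Sum>p\<in>P. a' d r * (a p r * b p c))"
      by (rule sum.cong) (use W c in \<open>auto simp: sum_distrib_left\<close>)
    also have "\<dots> = (\<Sum>p\<in>P. ip I (a' d) (a p) * b p c)"
      by (subst sum.swap) (simp add: ip_def sum_distrib_right sum_distrib_left mult.commute mult.left_commute)
    finally show ?thesis using 1 by simp
  qed
  have zspan: "z d \<in> fvs.span B" if d: "d \<in> T" for d
  proof -
    have t0: "\<tau> d \<noteq> 0" using d by (simp add: T_def)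
    have "z d = (\<Sum>p\<in>P. (\<lambda>c. (ip I (a' d) (a p) / \<tau> d) * (if c \<in> J then b p c else 0)))"
    proof
      fix c
      show "z d c = (\<Sum>p\<in>P. (\<lambda>c. (ip I (a' d) (a p) / \<tau> d) * (if c \<in> J then b p c else 0))) c"
      proof (cases "c \<in> J")
        case True
        have "b' d c = (\<Sum>p\<in>P. ip I (a' d) (a p) * b p c) / \<tau> d"
          using tb[OF d True] t0 by (simp add: field_simps)
        then show ?thesis using True by (simp add: z_def sum_fun_apply sum_divide_distrib)
      next
        case False then show ?thesis by (simp add: z_def sum_fun_apply)
      qed
    qed
    also have "\<dots> \<in> fvs.span B"
      by (intro fvs.span_sum fvs.span_scale fvs.span_base) (auto simp: B_def)
    finally show ?thesis .
  qed
  have dT: "d \<in> {1..k}" if "d \<in> T" for d using that by (simp add: T_def)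
  have ind: "fvs.independent (z ` T)"
  proof (rule orth_indep[OF J])
    fix x assume "x \<in> z ` T"
    then obtain d where d: "d \<in> T" "x = z d" by auto
    have "ip J x x = 1" using d zip SD(4)[OF dT dT] by auto
    then have "x \<noteq> 0" by (auto simp: ip_def)
    then show "supp_in J x \<and> x \<noteq> 0" using d by (auto simp: supp_in_def z_def)
  next
    fix x y assume "x \<in> z ` T" "y \<in> z ` T" "x \<noteq> y"
    then obtain d d' where "d \<in> T" "d' \<in> T" "x = z d" "y = z d'" "d \<noteq> d'" by auto
    then show "ip J x y = 0" using zip SD(4)[OF dT dT] by auto
  qed
  have "card (z ` T) \<le> card B"
    using fvs.independent_span_bound[OF _ ind] zspan P by (auto simp: B_def)
  also have "card B \<le> card P" unfolding B_def by (rule card_image_le[OF P])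
  also have "card (z ` T) = card T"
  proof (rule card_image, rule inj_onI)
    fix d d' assume "d \<in> T" "d' \<in> T" "z d = z d'"
    then have "ip J (z d) (z d') = 1" using zip SD(4)[OF dT dT] by metis
    then show "d = d'" using zip SD(4) \<open>d \<in> T\<close> \<open>d' \<in> T\<close> dT by (metis zero_neq_one)
  qed
  finally show ?thesis by (simp add: T_def)
qed


lemma tail_bound:
  assumes I: "finite I" and J: "finite J" and P: "finite P" and PR: "card P \<le> R"
    and S: "svd_rep I J M k \<sigma> u v" and k: "k = min (card I) (card J)"
    and W: "\<And>r c. r \<in> I \<Longrightarrow> c \<in> J \<Longrightarrow> W r c = (\<Sum>p\<in>P. a p r * b p c)"
  shows "(\<Sum>e\<in>{Suc R..k}. (\<sigma> e)^2) \<le> (\<Sum>r\<in>I. \<Sum>c\<in>J. (M r c - W r c)^2)"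
proof -
  note SD = svd_repD[OF S]
  obtain \<tau> a' b' where SW: "svd_rep I J W k \<tau> a' b'" using svd_exists[OF I J, of W] k by auto
  note WD = svd_repD[OF SW]
  define T where "T = {d\<in>{1..k}. \<tau> d \<noteq> 0}"
  have T: "finite T" "T \<subseteq> {1..k}" by (auto simp: T_def)
  have cT: "card T \<le> R" using rank_le[OF I J P W SW] PR by (simp add: T_def)
  have OT: "\<And>d d'. d \<in> T \<Longrightarrow> d' \<in> T \<Longrightarrow> ip J (b' d) (b' d') = (if d = d' then 1 else 0)"
    using WD(4) T(2) by blast
  have Wrow: "W r c = (\<Sum>d\<in>T. (\<tau> d * a' d r) * b' d c)" if r: "r \<in> I" and c: "c \<in> J" for r c
  proof -
    have "W r c = (\<Sum>d\<in>{1..k}. \<tau> d * a' d r * b' d c)" by (rule WD(5)[OF r c])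
    also have "\<dots> = (\<Sum>d\<in>T. \<tau> d * a' d r * b' d c)"
      by (rule sum.mono_neutral_right) (auto simp: T_def)
    finally show ?thesis by simp
  qed
  define g where "g = (\<lambda>d. \<Sum>r\<in>I. (ip J (\<lambda>c. M r c) (b' d))^2)"
  have row: "(\<Sum>c\<in>J. (M r c - W r c)^2) \<ge> (\<Sum>c\<in>J. (M r c)^2) - (\<Sum>d\<in>T. (ip J (\<lambda>c. M r c) (b' d))^2)"
    if r: "r \<in> I" for r
  proof -
    have "(\<Sum>c\<in>J. (M r c - W r c)^2) = ip J (\<lambda>c. M r c - (\<Sum>d\<in>T. (\<tau> d * a' d r) * b' d c)) (\<lambda>c. M r c - (\<Sum>d\<in>T. (\<tau> d * a' d r) * b' d c))"
      unfolding ip_def power2_eq_square by (rule sum.cong) (use Wrow r in auto)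
    also have "\<dots> \<ge> ip J (\<lambda>c. M r c) (\<lambda>c. M r c) - (\<Sum>d\<in>T. (ip J (\<lambda>c. M r c) (b' d))^2)"
      by (rule proj_ineq) (use T OT in auto)
    finally show ?thesis by (simp add: ip_def power2_eq_square)
  qed
  have sum1: "(\<Sum>r\<in>I. \<Sum>c\<in>J. (M r c - W r c)^2) \<ge> (\<Sum>e\<in>{1..k}. (\<sigma> e)^2) - (\<Sum>d\<in>T. g d)"
  proof -
    have "(\<Sum>r\<in>I. \<Sum>c\<in>J. (M r c - W r c)^2) \<ge> (\<Sum>r\<in>I. (\<Sum>c\<in>J. (M r c)^2) - (\<Sum>d\<in>T. (ip J (\<lambda>c. M r c) (b' d))^2))"
      by (rule sum_mono) (use row in auto)
    also have "(\<Sum>r\<in>I. (\<Sum>c\<in>J. (M r c)^2) - (\<Sum>d\<in>T. (ip J (\<lambda>c. M r c) (b' d))^2))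
        = (\<Sum>r\<in>I. \<Sum>c\<in>J. (M r c)^2) - (\<Sum>d\<in>T. g d)"
      by (simp add: sum_subtractf g_def sum.swap[of _ T])
    also have "(\<Sum>r\<in>I. \<Sum>c\<in>J. (M r c)^2) = (\<Sum>e\<in>{1..k}. (\<sigma> e)^2)" by (rule svd_frob[OF S])
    finally show ?thesis .
  qed
  define w where "w = (\<lambda>e. \<Sum>d\<in>T. (ip J (v e) (b' d))^2)"
  have gd: "g d = (\<Sum>e\<in>{1..k}. (\<sigma> e)^2 * (ip J (v e) (b' d))^2)" for d
    unfolding g_def ip_def using svd_Mv[OF S, of "b' d"] by (simp add: ip_def)
  have gsum: "(\<Sum>d\<in>T. g d) = (\<Sum>e\<in>{1..k}. (\<sigma> e)^2 * w e)"
    unfolding gd w_def by (simp add: sum_distrib_left sum.swap[of _ T])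
  have w01: "0 \<le> w e \<and> w e \<le> 1" if e: "e \<in> {1..k}" for e
  proof
    show "0 \<le> w e" unfolding w_def by (simp add: sum_nonneg)
    have "w e \<le> ip J (v e) (v e)" unfolding w_def by (rule bessel) (use T OT in auto)
    then show "w e \<le> 1" using SD(4)[OF e e] by simp
  qed
  have wsum: "(\<Sum>e\<in>{1..k}. w e) \<le> real R"
  proof -
    have "(\<Sum>e\<in>{1..k}. w e) = (\<Sum>d\<in>T. \<Sum>e\<in>{1..k}. (ip J (b' d) (v e))^2)"
      unfolding w_def by (subst sum.swap) (simp add: ip_sym)
    also have "\<dots> \<le> (\<Sum>d\<in>T. ip J (b' d) (b' d))"
      by (rule sum_mono, rule bessel) (use SD(4) in auto)
    also have "\<dots> = (\<Sum>d\<in>T. 1)" by (rule sum.cong) (use OT in auto)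
    also have "\<dots> = real (card T)" by simp
    finally show ?thesis using cT by linarith
  qed
  have hdec: "(\<sigma> (Suc d))^2 \<le> (\<sigma> d)^2" if d: "d \<in> {1..<k}" for d
    using SD(2)[OF d] SD(1)[of "Suc d"] d by (intro power_mono) auto
  have "(\<Sum>e\<in>{Suc R..k}. (\<sigma> e)^2) \<le> (\<Sum>e\<in>{1..k}. (\<sigma> e)^2 * (1 - w e))"
    by (rule rearrange) (use hdec w01 wsum in auto)
  also have "\<dots> = (\<Sum>e\<in>{1..k}. (\<sigma> e)^2) - (\<Sum>d\<in>T. g d)"
    unfolding gsum by (simp add: right_diff_distrib sum_subtractf)
  finally show ?thesis using sum1 by linarith
qed


lemma group_entropy:
  fixes p :: "nat \<Rightarrow> real"
  assumes S: "finite S" and p0: "\<And>d. d \<in> S \<Longrightarrow> p d \<ge> 0"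
  shows "- (\<Sum>d\<in>S. p d * ln (p d)) \<le> (\<Sum>d\<in>S. p d) * ln (real (card S)) - (\<Sum>d\<in>S. p d) * ln (\<Sum>d\<in>S. p d)"
proof (cases "(\<Sum>d\<in>S. p d) = 0")
  case True
  then have "\<forall>d\<in>S. p d = 0" using sum_nonneg_eq_0_iff[OF S] p0 by blast
  then show ?thesis by simp
next
  case False
  define P where "P = (\<Sum>d\<in>S. p d)"
  have P0: "P > 0" using False p0 sum_nonneg[of S p] by (simp add: P_def less_le)
  have Sne: "S \<noteq> {}" using False by auto
  then have cS: "card S > 0" using S by (simp add: card_gt_0_iff)
  define q where "q = P / real (card S)"
  have q0: "q > 0" using P0 cS by (simp add: q_def)
  have key: "p d * ln q - p d * ln (p d) \<le> q - p d" if d: "d \<in> S" for d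
  proof (cases "p d = 0")
    case True then show ?thesis using q0 by simp
  next
    case False
    then have pd: "p d > 0" using p0[OF d] by simp
    have "ln (q / p d) \<le> q / p d - 1" by (rule ln_le_minus_one) (use pd q0 in simp)
    then have "p d * ln (q / p d) \<le> p d * (q / p d - 1)" using pd by (simp add: mult_left_mono)
    then show ?thesis using pd q0 by (simp add: ln_div right_diff_distrib)
  qed
  have "(\<Sum>d\<in>S. p d * ln q - p d * ln (p d)) \<le> (\<Sum>d\<in>S. q - p d)"
    by (rule sum_mono) (use key in auto)
  also have "\<dots> = 0" using cS by (simp add: sum_subtractf q_def P_def)
  finally have "P * ln q - (\<Sum>d\<in>S. p d * ln (p d)) \<le> 0"
    by (simp add: sum_subtractf sum_distrib_right[symmetric] P_def)
  moreover have "ln q = ln P - ln (real (card S))" using P0 cS by (simp add: q_def ln_div)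
  ultimately show ?thesis by (simp add: P_def algebra_simps)
qed

lemma neg_xlnx_le: assumes "0 \<le> t" shows "- (t * ln t) \<le> 2 * sqrt t"
proof (cases "t = 0")
  case True then show ?thesis by simp
next
  case False
  then have t: "t > 0" using assms by simp
  have st: "sqrt t > 0" using t by simp
  have "ln (1 / sqrt t) \<le> 1 / sqrt t - 1" by (rule ln_le_minus_one) (use st in simp)
  then have "- ln (sqrt t) \<le> 1 / sqrt t" using st by (simp add: ln_div)
  moreover have "ln t = 2 * ln (sqrt t)"
    using ln_sqrt[of t] t by simp
  ultimately have "- ln t \<le> 2 / sqrt t" by simp
  then have "t * (- ln t) \<le> t * (2 / sqrt t)" using t by (intro mult_left_mono) auto
  also have "t * (2 / sqrt t) = 2 * sqrt t"
  proof -
    have "t / sqrt t = sqrt t" using t by (simp add: real_div_sqrt)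
    moreover have "t * (2 / sqrt t) = 2 * (t / sqrt t)" by simp
    ultimately show ?thesis by simp
  qed
  finally show ?thesis by simp
qed

lemma neg_1mt_ln: fixes t :: real assumes "0 \<le> t" "t < 1" shows "- ((1 - t) * ln (1 - t)) \<le> t"
proof -
  have "ln (1 / (1 - t)) \<le> 1 / (1 - t) - 1" by (rule ln_le_minus_one) (use assms in simp)
  then have "- ln (1 - t) \<le> t / (1 - t)" using assms by (simp add: ln_div field_simps)
  then have "(1 - t) * (- ln (1 - t)) \<le> (1 - t) * (t / (1 - t))" using assms by (intro mult_left_mono) auto
  then show ?thesis using assms by simp
qed

lemma entropy_bound:
  fixes p :: "nat \<Rightarrow> real" and k R :: nat and x :: real
  assumes p0: "\<And>d. d \<in> {1..k} \<Longrightarrow> p d \<ge> 0" and p1: "(\<Sum>d\<in>{1..k}. p d) = 1"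
    and tail: "(\<Sum>d\<in>{Suc R..k}. p d) \<le> x^2 / 4"
    and x0: "0 \<le> x" and x1: "x \<le> 1/2" and R1: "R \<ge> 1"
  shows "- (\<Sum>d\<in>{1..k}. p d * ln (p d)) \<le> ln (real R) + x * ln (real k) + 2 * sqrt x"
proof -
  define H where "H = {1..min R k}"
  define T where "T = {Suc R..k}"
  have split: "{1..k} = H \<union> T" "H \<inter> T = {}" by (auto simp: H_def T_def)
  define t where "t = (\<Sum>d\<in>T. p d)"
  have t0: "t \<ge> 0" unfolding t_def by (rule sum_nonneg) (use p0 in \<open>auto simp: T_def\<close>)
  have tx: "t \<le> x^2/4" using tail by (simp add: t_def T_def)
  have x2: "x^2 \<le> x" using x0 x1 mult_left_le_one_le[of x x] by (simp add: power2_eq_square)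
  have tx': "t \<le> x" using tx x2 t0 by linarith
  have t1: "t < 1" using tx x2 x1 by simp
  have PH: "(\<Sum>d\<in>H. p d) = 1 - t"
    using p1 unfolding split(1) t_def by (subst (asm) sum.union_disjoint) (use split(2) in \<open>auto simp: H_def T_def\<close>)
  have Hsum: "(\<Sum>d\<in>{1..k}. p d * ln (p d)) = (\<Sum>d\<in>H. p d * ln (p d)) + (\<Sum>d\<in>T. p d * ln (p d))"
    unfolding split(1) by (rule sum.union_disjoint) (use split(2) in \<open>auto simp: H_def T_def\<close>)
  have k1: "k \<ge> 1" using p1 by (cases k) auto
  have cH: "card H \<ge> 1" "card H \<le> R" using k1 R1 by (auto simp: H_def)
  have cT: "card T \<le> k" by (simp add: T_def)
  have eH: "- (\<Sum>d\<in>H. p d * ln (p d)) \<le> (1 - t) * ln (real (card H)) - (1 - t) * ln (1 - t)"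
    using group_entropy[of H p] p0 PH by (auto simp: H_def)
  have eT: "- (\<Sum>d\<in>T. p d * ln (p d)) \<le> t * ln (real (card T)) - t * ln t"
    using group_entropy[of T p] p0 by (auto simp: T_def t_def)
  have lnH: "(1 - t) * ln (real (card H)) \<le> ln (real R)"
  proof -
    have "ln (real (card H)) \<le> ln (real R)" using cH by simp
    moreover have "0 \<le> ln (real (card H))" using cH by simp
    ultimately show ?thesis using t0 t1 mult_left_le_one_le[of "ln (real (card H))" "1 - t"]
      by linarith
  qed
  have lnT: "t * ln (real (card T)) \<le> x * ln (real k)"
  proof (cases "card T = 0")
    case True then show ?thesis using x0 k1 by simp
  next
    case False
    then have "ln (real (card T)) \<le> ln (real k)" "0 \<le> ln (real (card T))" using cT by auto
    then show ?thesis using tx' t0 x0 mult_mono[of t x "ln (real (card T))" "ln (real k)"] by linarith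
  qed
  have h1: "- (t * ln t) \<le> 2 * sqrt t" by (rule neg_xlnx_le[OF t0])
  have h2: "- ((1 - t) * ln (1 - t)) \<le> t" by (rule neg_1mt_ln[OF t0 t1])
  have st: "sqrt t \<le> x / 2"
  proof -
    have "sqrt t \<le> sqrt (x^2/4)" using tx by simp
    also have "sqrt (x^2/4) = x / 2" using x0 by (simp add: real_sqrt_divide)
    finally show ?thesis .
  qed
  have sx: "x \<le> sqrt x" using x0 x1 by (simp add: real_le_rsqrt x2)
  have "- (\<Sum>d\<in>{1..k}. p d * ln (p d)) \<le> ln (real R) + x * ln (real k) + (2 * sqrt t + t)"
    using Hsum eH eT lnH lnT h1 h2 by linarith
  also have "2 * sqrt t + t \<le> 2 * sqrt x" using st tx x2 sx x1 real_sqrt_ge_zero[OF x0] by linarith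
  finally show ?thesis by simp
qed


lemma card_rowidx: "finite K \<Longrightarrow> card (rowidx D K) = (\<Prod>n\<in>K. D n)"
  unfolding rowidx_def by (simp add: card_PiE)

lemma finite_rowidx: "finite K \<Longrightarrow> finite (rowidx D K)"
  unfolding rowidx_def by (simp add: finite_PiE)

lemma DK_card: "finite K \<Longrightarrow> DK N D K = min (card (rowidx D K)) (card (rowidx D ({1..N} - K)))"
  unfolding DK_def by (simp add: card_rowidx)

lemma merge_in_tidx:
  assumes K: "K \<subseteq> {1..N}" and r: "r \<in> rowidx D K" and c: "c \<in> rowidx D ({1..N} - K)"
  shows "merge_idx K r c \<in> tidx N D"
  using assms unfolding tidx_def rowidx_def merge_idx_def by (auto simp: PiE_iff extensional_def)

lemma sum_tidx_split:
  assumes K: "K \<subseteq> {1..N}"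
  shows "(\<Sum>i\<in>tidx N D. f i) = (\<Sum>r\<in>rowidx D K. \<Sum>c\<in>rowidx D ({1..N} - K). f (merge_idx K r c))"
proof -
  let ?I = "rowidx D K" and ?J = "rowidx D ({1..N} - K)"
  have bij: "bij_betw (\<lambda>(r, c). merge_idx K r c) (?I \<times> ?J) (tidx N D)"
  proof (rule bij_betw_byWitness[where f' = "\<lambda>i. (restrict i K, restrict i ({1..N} - K))"])
    show "\<forall>a\<in>?I \<times> ?J. (\<lambda>i. (restrict i K, restrict i ({1..N} - K))) ((\<lambda>(r, c). merge_idx K r c) a) = a"
      using K by (auto simp: rowidx_def merge_idx_def PiE_iff fun_eq_iff restrict_def)
    show "\<forall>a'\<in>tidx N D. (\<lambda>(r, c). merge_idx K r c) ((\<lambda>i. (restrict i K, restrict i ({1..N} - K))) a') = a'"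
      using K by (auto simp: tidx_def merge_idx_def PiE_iff fun_eq_iff restrict_def)
    show "(\<lambda>(r, c). merge_idx K r c) ` (?I \<times> ?J) \<subseteq> tidx N D"
      using merge_in_tidx[OF K] by auto
    show "(\<lambda>i. (restrict i K, restrict i ({1..N} - K))) ` tidx N D \<subseteq> ?I \<times> ?J"
      using K by (auto simp: tidx_def rowidx_def PiE_iff extensional_def split: if_splits)
  qed
  have "(\<Sum>i\<in>tidx N D. f i) = (\<Sum>p\<in>?I \<times> ?J. f ((\<lambda>(r, c). merge_idx K r c) p))"
    using sum.reindex_bij_betw[OF bij, of f] by simp
  also have "\<dots> = (\<Sum>r\<in>?I. \<Sum>c\<in>?J. f (merge_idx K r c))"
    by (simp add: sum.cartesian_product case_prod_unfold)
  finally show ?thesis .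
qed

lemma is_singvals_iff:
  "is_singvals N D K A \<sigma> \<longleftrightarrow> (\<exists>u v. svd_rep (rowidx D K) (rowidx D ({1..N} - K)) (matricize K A) (DK N D K) \<sigma> u v)"
  unfolding is_singvals_def svd_rep_def ip_def by blast

lemma singvals_ok:
  assumes K: "K \<subseteq> {1..N}"
  shows "\<exists>u v. svd_rep (rowidx D K) (rowidx D ({1..N} - K)) (matricize K A) (DK N D K) (singvals N D K A) u v"
proof -
  have fK: "finite K" using K finite_subset by blast
  have "\<exists>\<sigma>. is_singvals N D K A \<sigma>"
    unfolding is_singvals_iff DK_card[OF fK]
    using svd_exists[OF finite_rowidx[OF fK] finite_rowidx[of "{1..N} - K"], where M = "matricize K A"] by auto
  then have "is_singvals N D K A (singvals N D K A)"
    unfolding singvals_def by (rule someI_ex)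
  then show ?thesis unfolding is_singvals_iff .
qed

lemma fnorm_sq:
  "(fnorm N D A)^2 = (\<Sum>i\<in>tidx N D. (A i)^2)"
  unfolding fnorm_def by (simp add: sum_nonneg)

lemma QE_sum:
  assumes K: "K \<subseteq> {1..N}"
  shows "(\<Sum>d\<in>{1..DK N D K}. (singvals N D K A d)^2) = (fnorm N D A)^2"
proof -
  obtain u v where S: "svd_rep (rowidx D K) (rowidx D ({1..N} - K)) (matricize K A) (DK N D K) (singvals N D K A) u v"
    using singvals_ok[OF K] by blast
  have "(fnorm N D A)^2 = (\<Sum>r\<in>rowidx D K. \<Sum>c\<in>rowidx D ({1..N} - K). (matricize K A r c)^2)"
    unfolding fnorm_sq sum_tidx_split[OF K] matricize_def ..
  also have "\<dots> = (\<Sum>d\<in>{1..DK N D K}. (singvals N D K A d)^2)" by (rule svd_frob[OF S])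
  finally show ?thesis by simp
qed

lemma QE_nonneg: "QE N D A K \<ge> 0"
proof -
  define \<sigma> where "\<sigma> = singvals N D K A"
  define s where "s = (\<Sum>d\<in>{1..DK N D K}. (\<sigma> d)^2)"
  have "(\<sigma> d)^2 / s * ln ((\<sigma> d)^2 / s) \<le> 0" if d: "d \<in> {1..DK N D K}" and s0: "s \<noteq> 0" for d
  proof -
    have le: "(\<sigma> d)^2 \<le> s" unfolding s_def by (rule member_le_sum) (use d in auto)
    have sp: "s > 0" using s0 le zero_le_power2[of "\<sigma> d"] by linarith
    have p0: "0 \<le> (\<sigma> d)^2 / s" using sp by simp
    have p1: "(\<sigma> d)^2 / s \<le> 1" using sp le by simp
    show ?thesis
    proof (cases "(\<sigma> d)^2 / s = 0")
      case True then show ?thesis unfolding True by simp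
    next
      case False
      then have "(\<sigma> d)^2 / s > 0" using p0 by (simp add: less_le)
      then have "ln ((\<sigma> d)^2 / s) \<le> 0" using ln_le_minus_one[of "(\<sigma> d)^2 / s"] p1 by linarith
      then show ?thesis using p0 mult_nonneg_nonpos by blast
    qed
  qed
  then show ?thesis
    unfolding QE_def Let_def \<sigma>_def[symmetric] s_def[symmetric]
    by (auto intro!: sum_nonpos)
qed


definition blk :: "nat \<Rightarrow> nat \<Rightarrow> nat set" where
  "blk h n = {2^h*(n-1)+1 .. 2^h*n}"

lemma blk_children:
  assumes "n \<ge> 1"
  shows "blk h (2*n-1) \<union> blk h (2*n) = blk (Suc h) n" "blk h (2*n-1) \<inter> blk h (2*n) = {}"
proof -
  obtain m where n: "n = Suc m" using assms by (cases n) auto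
  define q :: nat where "q = 2^h"
  have q: "q > 0" by (simp add: q_def)
  have e1: "blk h (2*n-1) = {q*(2*m)+1 .. q*(2*m+1)}" by (simp add: blk_def q_def n)
  have e2: "blk h (2*n) = {q*(2*m+1)+1 .. q*(2*m+2)}" by (simp add: blk_def q_def n)
  have e3: "blk (Suc h) n = {q*(2*m)+1 .. q*(2*m+2)}" by (simp add: blk_def q_def n algebra_simps)
  have m1: "q*(2*m) \<le> q*(2*m+1)" "q*(2*m+1) \<le> q*(2*m+2)" by simp_all
  show "blk h (2*n-1) \<union> blk h (2*n) = blk (Suc h) n" unfolding e1 e2 e3 using m1 by auto
  show "blk h (2*n-1) \<inter> blk h (2*n) = {}" unfolding e1 e2 by auto
qed

lemma tn_local:
  "n \<ge> 1 \<Longrightarrow> (\<And>j. j \<in> blk h n \<Longrightarrow> i j = i' j) \<Longrightarrow> tn_node phi0 a R h n r i = tn_node phi0 a R h n r i'"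
proof (induction h arbitrary: n r)
  case 0
  then have "n \<in> blk 0 n" by (simp add: blk_def)
  then show ?case using 0 by simp
next
  case (Suc h)
  have c: "blk h (2*n-1) \<subseteq> blk (Suc h) n" "blk h (2*n) \<subseteq> blk (Suc h) n"
    using blk_children[OF Suc.prems(1), of h] by auto
  have n1: "2*n-1 \<ge> 1" "2*n \<ge> 1" using Suc.prems(1) by auto
  have "tn_node phi0 a R h (2*n-1) p i = tn_node phi0 a R h (2*n-1) p i'" for p
    by (rule Suc.IH[OF n1(1)]) (use c Suc.prems(2) in auto)
  moreover have "tn_node phi0 a R h (2*n) p i = tn_node phi0 a R h (2*n) p i'" for p
    by (rule Suc.IH[OF n1(2)]) (use c Suc.prems(2) in auto)
  ultimately show ?case by simp
qed

lemma blk_sub: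
  assumes "1 \<le> n" "n \<le> 2^(L-h)" "h \<le> L"
  shows "blk h n \<subseteq> {1..2^L}"
proof -
  have "2^h * n \<le> 2^h * 2^(L-h)" using assms by simp
  also have "\<dots> = (2::nat)^L" using assms(3) by (simp add: power_add[symmetric])
  finally show ?thesis by (auto simp: blk_def)
qed


definition dep_out :: "nat \<Rightarrow> nat set \<Rightarrow> tensor \<Rightarrow> bool" where
  "dep_out N B G \<longleftrightarrow> (\<forall>i i'. (\<forall>j\<in>{1..N} - B. i j = i' j) \<longrightarrow> G i = G i')"

lemma tree_expand:
  fixes W :: tensor
  assumes L: "L \<ge> 1"
    and W: "\<forall>i\<in>tidx (2^L) D. W i = (\<Sum>p\<in>{1..R}. \<Sum>q\<in>{1..R}.
                 atop p q * tn_node phi0 a R (L-1) 1 p i * tn_node phi0 a R (L-1) 2 q i)"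
  shows "j \<le> L - 1 \<Longrightarrow> n \<in> {1..2^(j+1)} \<Longrightarrow>
     \<exists>G. (\<forall>r. dep_out (2^L) (blk (L-1-j) n) (G r)) \<and>
         (\<forall>i\<in>tidx (2^L) D. W i = (\<Sum>r\<in>{1..R}. tn_node phi0 a R (L-1-j) n r i * G r i))"
proof (induction j arbitrary: n)
  case 0
  define H :: nat where "H = 2^(L-1)"
  have HL: "(2::nat)^L = 2 * H" unfolding H_def using L by (cases L) auto
  have b1: "blk (L-1) 1 = {1..H}" by (simp add: blk_def H_def)
  have b2: "blk (L-1) 2 = {H+1..2*H}" by (simp add: blk_def H_def mult.commute)
  have n: "n = 1 \<or> n = 2" using 0 by auto
  then show ?case
  proof
    assume n1: "n = 1"
    define G where "G = (\<lambda>r i. \<Sum>q\<in>{1..R}. atop r q * tn_node phi0 a R (L-1) 2 q i)"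
    have dep: "dep_out (2^L) (blk (L-1) 1) (G r)" for r
      unfolding dep_out_def
    proof (intro allI impI)
      fix i i' :: "nat \<Rightarrow> nat" assume ag: "\<forall>j\<in>{1..2^L} - blk (L-1) 1. i j = i' j"
      have ag': "i j = i' j" if "j \<in> blk (L-1) 2" for j
      proof -
        have "j \<in> {1..2^L} - blk (L-1) 1" using that unfolding b1 b2 HL by simp
        then show ?thesis using ag by blast
      qed
      have "tn_node phi0 a R (L-1) 2 q i = tn_node phi0 a R (L-1) 2 q i'" for q
        by (rule tn_local[OF _ ag']) simp_all
      then show "G r i = G r i'" unfolding G_def by simp
    qed
    have "W i = (\<Sum>r\<in>{1..R}. tn_node phi0 a R (L-1) 1 r i * G r i)" if "i \<in> tidx (2^L) D" for i
    proof -
      have "W i = (\<Sum>p\<in>{1..R}. \<Sum>q\<in>{1..R}. atop p q * tn_node phi0 a R (L-1) 1 p i * tn_node phi0 a R (L-1) 2 q i)"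
        using W that by blast
      also have "\<dots> = (\<Sum>r\<in>{1..R}. tn_node phi0 a R (L-1) 1 r i * G r i)"
        unfolding G_def sum_distrib_left by (intro sum.cong refl) (simp add: ac_simps)
      finally show ?thesis .
    qed
    then show ?thesis using dep n1 by auto
  next
    assume n2: "n = 2"
    define G where "G = (\<lambda>q i. \<Sum>p\<in>{1..R}. atop p q * tn_node phi0 a R (L-1) 1 p i)"
    have dep: "dep_out (2^L) (blk (L-1) 2) (G r)" for r
      unfolding dep_out_def
    proof (intro allI impI)
      fix i i' :: "nat \<Rightarrow> nat" assume ag: "\<forall>j\<in>{1..2^L} - blk (L-1) 2. i j = i' j"
      have ag': "i j = i' j" if "j \<in> blk (L-1) 1" for j
      proof -
        have "j \<in> {1..2^L} - blk (L-1) 2" using that unfolding b1 b2 HL by simp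
        then show ?thesis using ag by blast
      qed
      have "tn_node phi0 a R (L-1) 1 q i = tn_node phi0 a R (L-1) 1 q i'" for q
        by (rule tn_local[OF _ ag']) simp_all
      then show "G r i = G r i'" unfolding G_def by simp
    qed
    have "W i = (\<Sum>r\<in>{1..R}. tn_node phi0 a R (L-1) 2 r i * G r i)" if "i \<in> tidx (2^L) D" for i
    proof -
      have "W i = (\<Sum>p\<in>{1..R}. \<Sum>q\<in>{1..R}. atop p q * tn_node phi0 a R (L-1) 1 p i * tn_node phi0 a R (L-1) 2 q i)"
        using W that by blast
      also have "\<dots> = (\<Sum>q\<in>{1..R}. \<Sum>p\<in>{1..R}. atop p q * tn_node phi0 a R (L-1) 1 p i * tn_node phi0 a R (L-1) 2 q i)"
        by (rule sum.swap)
      also have "\<dots> = (\<Sum>r\<in>{1..R}. tn_node phi0 a R (L-1) 2 r i * G r i)"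
        unfolding G_def sum_distrib_left by (intro sum.cong refl) (simp add: ac_simps)
      finally show ?thesis .
    qed
    then show ?thesis using dep n2 by auto
  qed
next
  case (Suc j)
  define h where "h = L - 1 - Suc j"
  have hj: "Suc h = L - 1 - j" using Suc.prems(1) by (simp add: h_def)
  have hL: "Suc h \<le> L" using hj by simp
  define m where "m = (n + 1) div 2"
  have n: "1 \<le> n" "n \<le> 2^(j+2)" using Suc.prems(2) by auto
  have m1: "m \<ge> 1" using n(1) unfolding m_def by presburger
  have m2: "m \<le> 2^(j+1)"
  proof -
    have "n + 1 \<le> 2 * 2^(j+1) + 1" using n(2) by simp
    then have "(n + 1) div 2 \<le> (2 * 2^(j+1) + 1) div 2" by (rule div_le_mono)
    also have "(2 * 2^(j+1) + 1) div 2 = (2::nat)^(j+1)" by simp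
    finally show ?thesis by (simp add: m_def)
  qed
  have m: "m \<in> {1..2^(j+1)}" using m1 m2 by simp
  have jL: "j \<le> L - 1" using Suc.prems(1) by simp
  obtain G where Gdep: "\<And>r. dep_out (2^L) (blk (L-1-j) m) (G r)"
    and GW: "\<forall>i\<in>tidx (2^L) D. W i = (\<Sum>r\<in>{1..R}. tn_node phi0 a R (L-1-j) m r i * G r i)"
    using Suc.IH[OF jL m] by blast
  have Lh: "L - h = j + 2" using Suc.prems(1) by (simp add: h_def)
  have Lh1: "L - Suc h = j + 1" using Lh by simp
  have mb: "blk (Suc h) m \<subseteq> {1..2^L}"
    by (rule blk_sub) (use m hL Lh1 in auto)
  note ch = blk_children[OF m1, of h]
  have nn: "n = 2*m - 1 \<or> n = 2*m" using n(1) unfolding m_def by presburger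
  let ?T = "tn_node phi0 a R"
  have Wexp: "W i = (\<Sum>r\<in>{1..R}. \<Sum>p\<in>{1..R}. \<Sum>q\<in>{1..R}. a (Suc h) m r p q * ?T h (2*m-1) p i * ?T h (2*m) q i * G r i)"
    if "i \<in> tidx (2^L) D" for i
  proof -
    have "W i = (\<Sum>r\<in>{1..R}. ?T (Suc h) m r i * G r i)" using GW that hj by simp
    also have "\<dots> = (\<Sum>r\<in>{1..R}. \<Sum>p\<in>{1..R}. \<Sum>q\<in>{1..R}. a (Suc h) m r p q * ?T h (2*m-1) p i * ?T h (2*m) q i * G r i)"
      by (simp only: tn_node.simps(2) sum_distrib_right)
    finally show ?thesis .
  qed
  have Gloc: "G r i = G r i'" if "\<forall>j\<in>{1..2^L} - blk h n. i j = i' j" for r i i'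
  proof -
    have "blk h n \<subseteq> blk (Suc h) m" using ch nn by blast
    then have "\<forall>j\<in>{1..2^L} - blk (L-1-j) m. i j = i' j" using that hj by auto
    then show ?thesis using Gdep[of r] unfolding dep_out_def by blast
  qed
  from nn show ?case
  proof
    assume nd: "n = 2*m - 1"
    define G' where "G' = (\<lambda>p i. \<Sum>r\<in>{1..R}. \<Sum>q\<in>{1..R}. a (Suc h) m r p q * ?T h (2*m) q i * G r i)"
    have dep: "dep_out (2^L) (blk h n) (G' p)" for p
      unfolding dep_out_def
    proof (intro allI impI)
      fix i i' :: "nat \<Rightarrow> nat" assume ag: "\<forall>j\<in>{1..2^L} - blk h n. i j = i' j"
      have sub: "blk h (2*m) \<subseteq> {1..2^L} - blk h n" using ch mb nd by blast
      have "?T h (2*m) q i = ?T h (2*m) q i'" for q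
        by (rule tn_local) (use m1 sub ag in auto)
      moreover have "G r i = G r i'" for r using Gloc ag by blast
      ultimately show "G' p i = G' p i'" by (simp add: G'_def)
    qed
    have "W i = (\<Sum>p\<in>{1..R}. ?T h n p i * G' p i)" if "i \<in> tidx (2^L) D" for i
    proof -
      have "W i = (\<Sum>r\<in>{1..R}. \<Sum>p\<in>{1..R}. \<Sum>q\<in>{1..R}. a (Suc h) m r p q * ?T h (2*m-1) p i * ?T h (2*m) q i * G r i)"
        by (rule Wexp[OF that])
      also have "\<dots> = (\<Sum>p\<in>{1..R}. \<Sum>r\<in>{1..R}. \<Sum>q\<in>{1..R}. a (Suc h) m r p q * ?T h (2*m-1) p i * ?T h (2*m) q i * G r i)"
        by (rule sum.swap)
      also have "\<dots> = (\<Sum>p\<in>{1..R}. ?T h n p i * G' p i)"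
        unfolding G'_def nd sum_distrib_left by (intro sum.cong refl) (simp add: ac_simps)
      finally show ?thesis .
    qed
    then show ?thesis using dep h_def by auto
  next
    assume nd: "n = 2*m"
    define G' where "G' = (\<lambda>q i. \<Sum>r\<in>{1..R}. \<Sum>p\<in>{1..R}. a (Suc h) m r p q * ?T h (2*m-1) p i * G r i)"
    have dep: "dep_out (2^L) (blk h n) (G' q)" for q
      unfolding dep_out_def
    proof (intro allI impI)
      fix i i' :: "nat \<Rightarrow> nat" assume ag: "\<forall>j\<in>{1..2^L} - blk h n. i j = i' j"
      have sub: "blk h (2*m-1) \<subseteq> {1..2^L} - blk h n" using ch mb nd by blast
      have m1': "2*m-1 \<ge> 1" using m1 by simp
      have "?T h (2*m-1) p i = ?T h (2*m-1) p i'" for p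
        by (rule tn_local[OF m1']) (use sub ag in auto)
      moreover have "G r i = G r i'" for r using Gloc ag by blast
      ultimately show "G' q i = G' q i'" by (simp add: G'_def)
    qed
    have "W i = (\<Sum>q\<in>{1..R}. ?T h n q i * G' q i)" if "i \<in> tidx (2^L) D" for i
    proof -
      have "W i = (\<Sum>r\<in>{1..R}. \<Sum>p\<in>{1..R}. \<Sum>q\<in>{1..R}. a (Suc h) m r p q * ?T h (2*m-1) p i * ?T h (2*m) q i * G r i)"
        by (rule Wexp[OF that])
      also have "\<dots> = (\<Sum>r\<in>{1..R}. \<Sum>q\<in>{1..R}. \<Sum>p\<in>{1..R}. a (Suc h) m r p q * ?T h (2*m-1) p i * ?T h (2*m) q i * G r i)"
        by (intro sum.cong refl sum.swap)
      also have "\<dots> = (\<Sum>q\<in>{1..R}. \<Sum>r\<in>{1..R}. \<Sum>p\<in>{1..R}. a (Suc h) m r p q * ?T h (2*m-1) p i * ?T h (2*m) q i * G r i)"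
        by (rule sum.swap)
      also have "\<dots> = (\<Sum>q\<in>{1..R}. ?T h n q i * G' q i)"
        unfolding G'_def nd sum_distrib_left by (intro sum.cong refl) (simp add: ac_simps)
      finally show ?thesis .
    qed
    then show ?thesis using dep h_def by auto
  qed
qed


lemma canonical_sub:
  assumes "K \<in> canonical L" shows "K \<subseteq> {1..2^L}"
proof -
  from assms obtain l n where l: "l \<le> L" "n \<in> {1..2^l}" and K: "K = {2^(L-l)*(n-1)+1 .. 2^(L-l)*n}"
    unfolding canonical_def by blast
  have "K = blk (L-l) n" by (simp add: K blk_def)
  also have "\<dots> \<subseteq> {1..2^L}" by (rule blk_sub) (use l in auto)
  finally show ?thesis .
qed

lemma lctn_factor:
  assumes L: "L > 0" and R: "R > 0" and W: "is_lctn L D R W" and K: "K \<in> canonical L"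
  shows "\<exists>(P :: nat set) a b. finite P \<and> card P \<le> R \<and>
     (\<forall>r\<in>rowidx D K. \<forall>c\<in>rowidx D ({1..2^L} - K). W (merge_idx K r c) = (\<Sum>p\<in>P. a p r * b p c))"
proof -
  from K obtain l n where l: "l \<le> L" "n \<in> {1..2^l}" and Kd: "K = {2^(L-l)*(n-1)+1 .. 2^(L-l)*n}"
    unfolding canonical_def by blast
  have Ksub: "K \<subseteq> {1..2^L}" by (rule canonical_sub[OF K])
  show ?thesis
  proof (cases "l = 0")
    case True
    then have n1: "n = 1" using l by simp
    have KN: "K = {1..2^L}" using Kd True n1 by simp
    have Jd: "rowidx D ({1..2^L} - K) = {\<lambda>_. undefined}" unfolding KN rowidx_def by simp
    show ?thesis
      by (rule exI[of _ "{1::nat}"], rule exI[of _ "\<lambda>p r. W (merge_idx K r (\<lambda>_. undefined))"],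
          rule exI[of _ "\<lambda>p c. 1"]) (use R Jd in auto)
  next
    case False
    from W obtain phi0 a atop where Wd: "\<forall>i\<in>tidx (2^L) D. W i = (\<Sum>p\<in>{1..R}. \<Sum>q\<in>{1..R}.
                 atop p q * tn_node phi0 a R (L-1) 1 p i * tn_node phi0 a R (L-1) 2 q i)"
      unfolding is_lctn_def by blast
    define j where "j = l - 1"
    have jL: "j \<le> L - 1" using l False by (simp add: j_def)
    have nj: "n \<in> {1..2^(j+1)}" using l False by (simp add: j_def)
    have hj: "L - 1 - j = L - l" using l False by (simp add: j_def)
    obtain G where Gdep: "\<And>r. dep_out (2^L) (blk (L-l) n) (G r)"
      and GW: "\<forall>i\<in>tidx (2^L) D. W i = (\<Sum>r\<in>{1..R}. tn_node phi0 a R (L-l) n r i * G r i)"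
      using tree_expand[OF _ Wd jL nj] L hj by auto
    have Kb: "K = blk (L-l) n" by (simp add: Kd blk_def)
    have n1: "n \<ge> 1" using l by simp
    define af where "af = (\<lambda>p r. tn_node phi0 a R (L-l) n p (merge_idx K r (\<lambda>_. 0)))"
    define bf where "bf = (\<lambda>p c. G p (merge_idx K (\<lambda>_. 0) c))"
    have "W (merge_idx K r c) = (\<Sum>p\<in>{1..R}. af p r * bf p c)"
      if r: "r \<in> rowidx D K" and c: "c \<in> rowidx D ({1..2^L} - K)" for r c
    proof -
      have mi: "merge_idx K r c \<in> tidx (2^L) D" by (rule merge_in_tidx[OF Ksub r c])
      have "tn_node phi0 a R (L-l) n p (merge_idx K r c) = af p r" for p
        unfolding af_def by (rule tn_local[OF n1]) (auto simp: merge_idx_def Kb)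
      moreover have "G p (merge_idx K r c) = bf p c" for p
        using Gdep[of p] unfolding dep_out_def bf_def by (auto simp: merge_idx_def Kb)
      ultimately show ?thesis using GW mi by simp
    qed
    then show ?thesis by (intro exI[of _ "{1..R}"] exI[of _ af] exI[of _ bf]) auto
  qed
qed

lemma part1:
  fixes L R :: nat and D :: "nat \<Rightarrow> nat" and W A :: tensor and \<epsilon> :: real
  assumes L: "L > 0" and R: "R > 0" and W: "is_lctn L D R W"
    and e0: "0 \<le> \<epsilon>" and e1: "\<epsilon> \<le> fnorm (2^L) D A / 4"
    and e2: "fnorm (2^L) D (\<lambda>i. W i - A i) \<le> \<epsilon>"
    and K: "K \<in> canonical L"
  shows "QE (2^L) D A K
              \<le> ln (real R)
                 + (if fnorm (2^L) D A = 0 then 0 else 2 * \<epsilon> / fnorm (2^L) D A)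
                     * ln (real (DK (2^L) D K))
                 + 2 * sqrt (if fnorm (2^L) D A = 0 then 0 else 2 * \<epsilon> / fnorm (2^L) D A)"
proof -
  define N :: nat where "N = 2^L"
  define nA where "nA = fnorm N D A"
  define \<sigma> where "\<sigma> = singvals N D K A"
  define k where "k = DK N D K"
  define s where "s = (\<Sum>d\<in>{1..k}. (\<sigma> d)^2)"
  have Ksub: "K \<subseteq> {1..N}" using canonical_sub[OF K] by (simp add: N_def)
  have fK: "finite K" using Ksub finite_subset by blast
  have sA: "s = nA^2" unfolding s_def nA_def \<sigma>_def k_def by (rule QE_sum[OF Ksub])
  have lnR: "ln (real R) \<ge> 0" using R by simp
  show ?thesis
  proof (cases "nA = 0")
    case True
    then have "s = 0" using sA by simp
    then have "QE N D A K = 0" unfolding QE_def Let_def \<sigma>_def[symmetric] k_def[symmetric] s_def[symmetric] by simp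
    then show ?thesis using True lnR by (simp add: N_def nA_def)
  next
    case False
    have "nA \<ge> 0" by (simp add: nA_def fnorm_def sum_nonneg)
    then have nA0: "nA > 0" using False by simp
    have s0: "s > 0" using sA nA0 by simp
    define x where "x = 2 * \<epsilon> / nA"
    have x0: "0 \<le> x" using e0 nA0 by (simp add: x_def)
    have x1: "x \<le> 1/2" using e1 nA0 by (simp add: x_def N_def nA_def field_simps)
    obtain u v where S: "svd_rep (rowidx D K) (rowidx D ({1..N} - K)) (matricize K A) k \<sigma> u v"
      using singvals_ok[OF Ksub, of D A] unfolding \<sigma>_def k_def by blast
    obtain P :: "nat set" and a b where P: "finite P" "card P \<le> R"
      and Wf: "\<forall>r\<in>rowidx D K. \<forall>c\<in>rowidx D ({1..N} - K). W (merge_idx K r c) = (\<Sum>p\<in>P. a p r * b p c)"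
      using lctn_factor[OF L R W K] by (auto simp: N_def)
    have tail: "(\<Sum>e\<in>{Suc R..k}. (\<sigma> e)^2)
        \<le> (\<Sum>r\<in>rowidx D K. \<Sum>c\<in>rowidx D ({1..N} - K). (matricize K A r c - W (merge_idx K r c))^2)"
      by (rule tail_bound[OF finite_rowidx[OF fK] finite_rowidx P S]) (use Wf in \<open>auto simp: k_def DK_card[OF fK]\<close>)
    also have "\<dots> = (\<Sum>i\<in>tidx N D. (W i - A i)^2)"
      unfolding sum_tidx_split[OF Ksub] matricize_def by (simp add: power2_commute)
    also have "\<dots> = (fnorm N D (\<lambda>i. W i - A i))^2" by (simp add: fnorm_sq)
    also have "\<dots> \<le> \<epsilon>^2"
      using e2 by (intro power_mono) (auto simp: N_def fnorm_def sum_nonneg)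
    finally have tl: "(\<Sum>e\<in>{Suc R..k}. (\<sigma> e)^2) \<le> \<epsilon>^2" .
    define p where "p = (\<lambda>d. (\<sigma> d)^2 / s)"
    have p0: "\<And>d. d \<in> {1..k} \<Longrightarrow> p d \<ge> 0" using s0 by (simp add: p_def)
    have p1: "(\<Sum>d\<in>{1..k}. p d) = 1" using s0 by (simp add: p_def s_def sum_divide_distrib[symmetric])
    have ptail: "(\<Sum>d\<in>{Suc R..k}. p d) \<le> x^2/4"
    proof -
      have "(\<Sum>d\<in>{Suc R..k}. p d) = (\<Sum>e\<in>{Suc R..k}. (\<sigma> e)^2) / s"
        by (simp add: p_def sum_divide_distrib)
      also have "\<dots> \<le> \<epsilon>^2 / s" using tl s0 by (simp add: divide_right_mono)
      also have "\<epsilon>^2 / s = x^2/4" using nA0 by (simp add: sA x_def power2_eq_square field_simps)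
      finally show ?thesis .
    qed
    have R1: "R \<ge> 1" using R by simp
    have "- (\<Sum>d\<in>{1..k}. p d * ln (p d)) \<le> ln (real R) + x * ln (real k) + 2 * sqrt x"
      by (rule entropy_bound[OF p0 p1 ptail x0 x1 R1])
    moreover have "QE N D A K = - (\<Sum>d\<in>{1..k}. p d * ln (p d))"
      unfolding QE_def Let_def \<sigma>_def[symmetric] k_def[symmetric] s_def[symmetric] p_def using s0 by simp
    ultimately show ?thesis using False by (simp add: N_def nA_def x_def k_def)
  qed
qed


lemma opnorm_bound:
  assumes I: "finite I" and J: "finite J" and B0: "B \<ge> 0"
    and U: "\<And>c r r'. c \<in> J \<Longrightarrow> r \<in> I \<Longrightarrow> r' \<in> I \<Longrightarrow> M r c \<noteq> 0 \<Longrightarrow> M r' c \<noteq> 0 \<Longrightarrow> r = r'"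
    and RB: "\<And>r. r \<in> I \<Longrightarrow> (\<Sum>c\<in>J. (M r c)^2) \<le> B"
  shows "(bil I J M x y)^2 \<le> B * ip I x x * ip J y y"
proof -
  define g where "g = (\<lambda>r. \<Sum>c\<in>J. M r c * y c)"
  define ind where "ind = (\<lambda>r c. if M r c \<noteq> 0 then 1 else (0::real))"
  have "bil I J M x y = (\<Sum>r\<in>I. x r * g r)" unfolding bil_Mv ip_def Mv_def g_def ..
  then have b1: "(bil I J M x y)^2 \<le> ip I x x * (\<Sum>r\<in>I. (g r)^2)"
    using Cauchy_Schwarz_ineq_sum[of x g I] by (simp add: ip_def power2_eq_square)
  have gr: "(g r)^2 \<le> B * (\<Sum>c\<in>J. ind r c * (y c)^2)" if r: "r \<in> I" for r
  proof -
    have "g r = (\<Sum>c\<in>J. M r c * (ind r c * y c))" unfolding g_def ind_def by (rule sum.cong) auto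
    then have "(g r)^2 \<le> (\<Sum>c\<in>J. (M r c)^2) * (\<Sum>c\<in>J. (ind r c * y c)^2)"
      using Cauchy_Schwarz_ineq_sum[of "\<lambda>c. M r c" "\<lambda>c. ind r c * y c" J] by simp
    also have "(\<Sum>c\<in>J. (ind r c * y c)^2) = (\<Sum>c\<in>J. ind r c * (y c)^2)"
      by (rule sum.cong) (auto simp: ind_def power2_eq_square)
    also have "(\<Sum>c\<in>J. (M r c)^2) * (\<Sum>c\<in>J. ind r c * (y c)^2) \<le> B * (\<Sum>c\<in>J. ind r c * (y c)^2)"
      by (rule mult_right_mono[OF RB[OF r]]) (auto simp: ind_def intro!: sum_nonneg)
    finally show ?thesis .
  qed
  have col: "(\<Sum>r\<in>I. ind r c) \<le> 1" if c: "c \<in> J" for c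
  proof -
    have "(\<Sum>r\<in>I. ind r c) = real (card {r\<in>I. M r c \<noteq> 0})"
      unfolding ind_def using I by (simp add: sum.If_cases Int_def conj_commute)
    also have "card {r\<in>I. M r c \<noteq> 0} \<le> Suc 0"
      using I U[OF c] by (subst card_le_Suc0_iff_eq) auto
    finally show ?thesis by simp
  qed
  have "(\<Sum>r\<in>I. (g r)^2) \<le> (\<Sum>r\<in>I. B * (\<Sum>c\<in>J. ind r c * (y c)^2))"
    by (rule sum_mono) (use gr in auto)
  also have "\<dots> = B * (\<Sum>c\<in>J. (\<Sum>r\<in>I. ind r c) * (y c)^2)"
    by (simp add: sum_distrib_left[symmetric] sum_distrib_right sum.swap[of _ I])
  also have "\<dots> \<le> B * (\<Sum>c\<in>J. (y c)^2)"
  proof (intro mult_left_mono[OF _ B0] sum_mono)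
    fix c assume c: "c \<in> J"
    show "(\<Sum>r\<in>I. ind r c) * (y c)^2 \<le> (y c)^2"
      using mult_right_mono[OF col[OF c], of "(y c)^2"] by simp
  qed
  also have "\<dots> = B * ip J y y" by (simp add: ip_def power2_eq_square)
  finally have b2: "(\<Sum>r\<in>I. (g r)^2) \<le> B * ip J y y" .
  have "ip I x x * (\<Sum>r\<in>I. (g r)^2) \<le> ip I x x * (B * ip J y y)"
    by (rule mult_left_mono[OF b2 ip_nonneg])
  then show ?thesis using b1 by (simp add: mult.assoc mult.left_commute)
qed

lemma svd_sigma_bil:
  assumes S: "svd_rep I J M k \<sigma> u v" and d: "d \<in> {1..k}"
  shows "bil I J M (u d) (v d) = \<sigma> d"
proof -
  note SD = svd_repD[OF S]
  have "ip I (u d) (Mv J M (v d)) = ip I (u d) (\<lambda>r. \<sigma> d * u d r)"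
  proof (rule ip_cong)
    fix r assume r: "r \<in> I"
    have "Mv J M (v d) r = (\<Sum>c\<in>J. \<Sum>e\<in>{1..k}. \<sigma> e * u e r * v e c * v d c)"
      unfolding Mv_def by (rule sum.cong) (use SD(5) r in \<open>auto simp: sum_distrib_right\<close>)
    also have "\<dots> = (\<Sum>e\<in>{1..k}. (\<sigma> e * u e r) * ip J (v e) (v d))"
      by (subst sum.swap) (simp add: ip_def sum_distrib_left mult.assoc)
    also have "\<dots> = \<sigma> d * u d r" by (rule sum_kron) (use SD(4) d in auto)
    finally show "Mv J M (v d) r = \<sigma> d * u d r" .
  qed simp
  also have "\<dots> = \<sigma> d * ip I (u d) (u d)" unfolding ip_def by (simp add: sum_distrib_left mult.left_commute)
  also have "\<dots> = \<sigma> d" using SD(3)[OF d d] by simp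
  finally show ?thesis by (simp add: bil_Mv)
qed

lemma entropy_lower:
  fixes p :: "nat \<Rightarrow> real"
  assumes p0: "\<And>d. d \<in> S \<Longrightarrow> p d \<ge> 0" and p1: "(\<Sum>d\<in>S. p d) = 1"
    and pT: "\<And>d. d \<in> S \<Longrightarrow> p d \<le> 1 / T" and T: "T > 0"
  shows "- (\<Sum>d\<in>S. p d * ln (p d)) \<ge> ln T"
proof -
  have "p d * ln T \<le> - (p d * ln (p d))" if d: "d \<in> S" for d
  proof (cases "p d = 0")
    case True then show ?thesis by simp
  next
    case False
    then have pd: "p d > 0" using p0[OF d] by simp
    have "ln (p d) \<le> ln (1 / T)" using pd pT[OF d] T by simp
    then have "ln (p d) \<le> - ln T" using T by (simp add: ln_div)
    then have "p d * ln (p d) \<le> p d * (- ln T)" using pd by (intro mult_left_mono) auto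
    then show ?thesis by simp
  qed
  then have "(\<Sum>d\<in>S. p d * ln T) \<le> (\<Sum>d\<in>S. - (p d * ln (p d)))" by (rule sum_mono)
  then show ?thesis using p1 by (simp add: sum_distrib_right[symmetric] sum_negf)
qed


definition okrc :: "nat \<Rightarrow> nat set \<Rightarrow> (nat \<Rightarrow> nat) \<Rightarrow> nat \<Rightarrow> (nat \<Rightarrow> nat) \<Rightarrow> (nat \<Rightarrow> nat) \<Rightarrow> bool" where
  "okrc N K \<pi> m r c \<longleftrightarrow> (\<forall>j\<in>K. r j < m \<and> c (\<pi> j) = r j) \<and> (\<forall>j\<in>{1..N} - K. \<pi> j \<notin> K \<longrightarrow> c j = c (\<pi> j) \<and> c j < m)"

lemma okrc_char:
  assumes Ksub: "K \<subseteq> {1..N}"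
    and pi1: "\<And>j. j \<in> {1..N} \<Longrightarrow> \<pi> j \<in> {1..N}" and pi2: "\<And>j. j \<in> {1..N} \<Longrightarrow> \<pi> (\<pi> j) = j"
    and pK: "\<And>j. j \<in> K \<Longrightarrow> \<pi> j \<notin> K"
  shows "(\<forall>j\<in>{1..N}. merge_idx K r c j = merge_idx K r c (\<pi> j) \<and> merge_idx K r c j < m) \<longleftrightarrow> okrc N K \<pi> m r c"
proof
  assume H: "\<forall>j\<in>{1..N}. merge_idx K r c j = merge_idx K r c (\<pi> j) \<and> merge_idx K r c j < m"
  show "okrc N K \<pi> m r c" unfolding okrc_def
  proof (intro conjI ballI impI)
    fix j assume j: "j \<in> K"
    then have "j \<in> {1..N}" using Ksub by auto
    then have "merge_idx K r c j = merge_idx K r c (\<pi> j) \<and> merge_idx K r c j < m" using H by blast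
    then show "r j < m" "c (\<pi> j) = r j" using j pK[OF j] by (auto simp: merge_idx_def)
  next
    fix j assume j: "j \<in> {1..N} - K" and pj: "\<pi> j \<notin> K"
    then have "merge_idx K r c j = merge_idx K r c (\<pi> j) \<and> merge_idx K r c j < m" using H by blast
    then show "c j = c (\<pi> j)" "c j < m" using j pj by (auto simp: merge_idx_def)
  qed
next
  assume O: "okrc N K \<pi> m r c"
  show "\<forall>j\<in>{1..N}. merge_idx K r c j = merge_idx K r c (\<pi> j) \<and> merge_idx K r c j < m"
  proof
    fix j assume j: "j \<in> {1..N}"
    show "merge_idx K r c j = merge_idx K r c (\<pi> j) \<and> merge_idx K r c j < m"
    proof (cases "j \<in> K")
      case True then show ?thesis using O pK[OF True] by (auto simp: okrc_def merge_idx_def)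
    next
      case False
      show ?thesis
      proof (cases "\<pi> j \<in> K")
        case True
        have "c (\<pi> (\<pi> j)) = r (\<pi> j)" "r (\<pi> j) < m" using O True by (auto simp: okrc_def)
        then show ?thesis using False True pi2[OF j] by (auto simp: merge_idx_def)
      next
        case pF: False
        then show ?thesis using O False j by (auto simp: okrc_def merge_idx_def)
      qed
    qed
  qed
qed


lemma part2_K:
  fixes N m :: nat and D :: "nat \<Rightarrow> nat" and \<pi> :: "nat \<Rightarrow> nat" and K :: "nat set"
  assumes Ksub: "K \<subseteq> {1..N}" and m1: "m \<ge> 1" and mD: "\<And>j. j \<in> {1..N} \<Longrightarrow> m \<le> D j"
    and pi1: "\<And>j. j \<in> {1..N} \<Longrightarrow> \<pi> j \<in> {1..N}" and pi2: "\<And>j. j \<in> {1..N} \<Longrightarrow> \<pi> (\<pi> j) = j"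
    and pK: "\<And>j. j \<in> K \<Longrightarrow> \<pi> j \<notin> K"
  shows "QE N D (\<lambda>i. if (\<forall>j\<in>{1..N}. i j = i (\<pi> j) \<and> i j < m) then 1 else 0) K \<ge> real (card K) * ln (real m)"
proof -
  define A' :: tensor where "A' = (\<lambda>i. if (\<forall>j\<in>{1..N}. i j = i (\<pi> j) \<and> i j < m) then 1 else 0)"
  define Kc where "Kc = {1..N} - K"
  define I where "I = rowidx D K"
  define J where "J = rowidx D Kc"
  define M where "M = matricize K A'"
  define supp where "supp = (\<lambda>r. {c\<in>J. okrc N K \<pi> m r c})"
  have fK: "finite K" using Ksub finite_subset by blast
  have fI: "finite I" and fJ: "finite J" by (simp_all add: I_def J_def Kc_def finite_rowidx fK)
  have Mv: "M r c = (if okrc N K \<pi> m r c then 1 else 0)" for r c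
    unfolding M_def matricize_def A'_def using okrc_char[OF Ksub pi1 pi2 pK] by simp
  have rowsum: "(\<Sum>c\<in>J. (M r c)^2) = real (card (supp r))" for r
  proof -
    have "(\<Sum>c\<in>J. (M r c)^2) = (\<Sum>c\<in>J. if okrc N K \<pi> m r c then 1 else 0)"
      by (rule sum.cong) (auto simp: Mv)
    also have "\<dots> = real (card (supp r))" using fJ by (simp add: sum.If_cases supp_def Int_def conj_commute)
    finally show ?thesis .
  qed
  define valid where "valid = (\<lambda>r. \<forall>j\<in>K. r j < m)"
  have inval: "supp r = {}" if "\<not> valid r" for r using that by (auto simp: supp_def okrc_def valid_def)
  define r0 :: "nat \<Rightarrow> nat" where "r0 = restrict (\<lambda>_. 0) K"
  have Dpos: "0 < D n" if "n \<in> {1..N}" for n using mD[OF that] m1 by simp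
  have r0I: "r0 \<in> I" unfolding r0_def I_def rowidx_def restrict_PiE_iff
    using Dpos Ksub by auto
  have r0v: "valid r0" using m1 by (simp add: valid_def r0_def)
  define B where "B = card (supp r0)"
  have piK: "\<pi> j \<in> Kc" if "j \<in> K" for j using that pi1 pK Ksub by (auto simp: Kc_def)
  have bij: "card (supp r) = B" if rI: "r \<in> I" and rv: "valid r" for r
  proof -
    define \<phi> where "\<phi> = (\<lambda>(r::nat\<Rightarrow>nat) c j. if j \<in> \<pi> ` K then r (\<pi> j) else c j)"
    have map: "\<phi> r' c \<in> supp r'" if r'I: "r' \<in> I" and r'v: "valid r'" and c: "c \<in> supp r''" and r''I: "r'' \<in> I" for r' r'' c
    proof -
      have cJ: "c \<in> J" and ok: "okrc N K \<pi> m r'' c" using c by (auto simp: supp_def)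
      have "\<phi> r' c \<in> J"
        unfolding J_def rowidx_def
      proof (rule PiE_I)
        fix j assume j: "j \<in> Kc"
        show "\<phi> r' c j \<in> {..<D j}"
        proof (cases "j \<in> \<pi> ` K")
          case True
          then obtain k where k: "k \<in> K" "j = \<pi> k" by auto
          have "r' (\<pi> j) < m" using r'v k pi2 Ksub by (auto simp: valid_def)
          moreover have "m \<le> D j" using mD j by (auto simp: Kc_def)
          ultimately show ?thesis using True by (simp add: \<phi>_def)
        next
          case False then show ?thesis using cJ j by (auto simp: \<phi>_def J_def rowidx_def PiE_iff)
        qed
      next
        fix j assume j: "j \<notin> Kc"
        then have "j \<notin> \<pi> ` K" using piK by auto
        then show "\<phi> r' c j = undefined" using cJ j by (auto simp: \<phi>_def J_def rowidx_def PiE_iff extensional_def)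
      qed
      moreover have "okrc N K \<pi> m r' (\<phi> r' c)"
        unfolding okrc_def
      proof (intro conjI ballI impI)
        fix j assume j: "j \<in> K"
        show "r' j < m" using r'v j by (simp add: valid_def)
        show "\<phi> r' c (\<pi> j) = r' j" using j pi2 Ksub by (auto simp: \<phi>_def)
      next
        fix j assume j: "j \<in> {1..N} - K" and pj: "\<pi> j \<notin> K"
        have nj: "j \<notin> \<pi> ` K"
        proof
          assume "j \<in> \<pi> ` K"
          then obtain k where k: "k \<in> K" "j = \<pi> k" by auto
          then have "\<pi> j = k" using pi2 Ksub by auto
          then show False using pj k by simp
        qed
        have npj: "\<pi> j \<notin> \<pi> ` K"
        proof
          assume "\<pi> j \<in> \<pi> ` K"
          then obtain k where k: "k \<in> K" "\<pi> j = \<pi> k" by auto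
          then have "\<pi> (\<pi> j) = \<pi> (\<pi> k)" by simp
          then have "j = k" using pi2 Ksub j k(1) by auto
          then show False using j k by simp
        qed
        show "\<phi> r' c j = \<phi> r' c (\<pi> j)" "\<phi> r' c j < m"
          using ok j pj nj npj by (auto simp: okrc_def \<phi>_def)
      qed
      ultimately show ?thesis by (simp add: supp_def)
    qed
    have inv: "\<phi> r'' (\<phi> r' c) = c" if c: "c \<in> supp r''" for r' r'' c
    proof
      fix j
      have ok: "okrc N K \<pi> m r'' c" using c by (auto simp: supp_def)
      show "\<phi> r'' (\<phi> r' c) j = c j"
      proof (cases "j \<in> \<pi> ` K")
        case True
        then obtain k where k: "k \<in> K" "j = \<pi> k" by auto
        then have "\<pi> j = k" using pi2 Ksub by auto
        then show ?thesis using True ok k by (auto simp: \<phi>_def okrc_def)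
      next
        case False then show ?thesis by (simp add: \<phi>_def)
      qed
    qed
    have "bij_betw (\<phi> r) (supp r0) (supp r)"
      by (rule bij_betw_byWitness[where f' = "\<phi> r0"]) (use map inv rI rv r0I r0v in blast)+
    then show ?thesis unfolding B_def by (simp add: bij_betw_same_card)
  qed
  have rowB: "(\<Sum>c\<in>J. (M r c)^2) \<le> real B" if "r \<in> I" for r
    using rowsum[of r] bij[OF that] inval[of r] by (cases "valid r") auto
  define c0 :: "nat \<Rightarrow> nat" where "c0 = restrict (\<lambda>_. 0) Kc"
  have c0J: "c0 \<in> J" unfolding c0_def J_def rowidx_def restrict_PiE_iff
    using Dpos by (auto simp: Kc_def)
  have "okrc N K \<pi> m r0 c0"
    unfolding okrc_def
  proof (intro conjI ballI impI)
    fix j assume j: "j \<in> K"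
    show "r0 j < m" using j m1 by (simp add: r0_def)
    show "c0 (\<pi> j) = r0 j" using j piK by (simp add: r0_def c0_def)
  next
    fix j assume j: "j \<in> {1..N} - K" and pj: "\<pi> j \<notin> K"
    have "\<pi> j \<in> Kc" using j pj pi1 by (auto simp: Kc_def)
    then show "c0 j = c0 (\<pi> j)" "c0 j < m" using j m1 by (auto simp: c0_def Kc_def)
  qed
  then have "c0 \<in> supp r0" using c0J by (simp add: supp_def)
  moreover have "finite (supp r0)" using fJ by (simp add: supp_def)
  ultimately have "card (supp r0) > 0" by (auto simp: card_gt_0_iff)
  then have B1: "B \<ge> 1" unfolding B_def by simp
  define V where "V = {r\<in>I. valid r}"
  have Vd: "V = PiE K (\<lambda>_. {..<m})"
  proof
    show "V \<subseteq> PiE K (\<lambda>_. {..<m})" by (auto simp: V_def I_def rowidx_def valid_def PiE_iff extensional_def)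
    show "PiE K (\<lambda>_. {..<m}) \<subseteq> V"
    proof
      fix r assume r: "r \<in> PiE K (\<lambda>_. {..<m})"
      have "r j < D j" if j: "j \<in> K" for j
      proof -
        have "r j < m" using r j by (auto simp: PiE_iff)
        moreover have "m \<le> D j" using mD[of j] Ksub j by auto
        ultimately show ?thesis by simp
      qed
      then show "r \<in> V" using r by (auto simp: V_def I_def rowidx_def valid_def PiE_iff)
    qed
  qed
  have cV: "card V = m ^ card K" unfolding Vd by (simp add: card_PiE fK)
  have tot: "(\<Sum>r\<in>I. \<Sum>c\<in>J. (M r c)^2) = real (m ^ card K) * real B"
  proof -
    have "(\<Sum>r\<in>I. \<Sum>c\<in>J. (M r c)^2) = (\<Sum>r\<in>I. if valid r then real B else 0)"
      by (rule sum.cong) (use rowsum bij inval in auto)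
    also have "\<dots> = real (card V) * real B" using fI by (simp add: sum.If_cases V_def Int_def conj_commute)
    finally show ?thesis using cV by simp
  qed
  define \<sigma> where "\<sigma> = singvals N D K A'"
  define k where "k = DK N D K"
  obtain u v where S: "svd_rep I J M k \<sigma> u v"
    using singvals_ok[OF Ksub, of D A'] unfolding \<sigma>_def k_def I_def J_def Kc_def M_def by blast
  note SD = svd_repD[OF S]
  define s where "s = (\<Sum>d\<in>{1..k}. (\<sigma> d)^2)"
  have s_eq: "s = real (m ^ card K) * real B" using svd_frob[OF S] tot by (simp add: s_def)
  have mpos: "real (m ^ card K) > 0" using m1 by simp
  have s0: "s > 0" using s_eq B1 mpos by simp
  have U: "r = r'" if c: "c \<in> J" and r: "r \<in> I" and r': "r' \<in> I" and "M r c \<noteq> 0" "M r' c \<noteq> 0" for c r r'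
  proof -
    have "okrc N K \<pi> m r c" "okrc N K \<pi> m r' c" using that by (auto simp: Mv split: if_splits)
    then have "\<forall>j\<in>K. r j = r' j" by (auto simp: okrc_def)
    then show ?thesis using r r' by (auto simp: I_def rowidx_def PiE_iff extensional_def fun_eq_iff)
  qed
  have sb: "(\<sigma> d)^2 \<le> real B" if d: "d \<in> {1..k}" for d
  proof -
    have "(bil I J M (u d) (v d))^2 \<le> real B * ip I (u d) (u d) * ip J (v d) (v d)"
      by (rule opnorm_bound[OF fI fJ]) (use U rowB in auto)
    then show ?thesis using svd_sigma_bil[OF S d] SD(3)[OF d d] SD(4)[OF d d] by simp
  qed
  define p where "p = (\<lambda>d. (\<sigma> d)^2 / s)"
  have "- (\<Sum>d\<in>{1..k}. p d * ln (p d)) \<ge> ln (real (m ^ card K))"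
  proof (rule entropy_lower)
    show "\<And>d. d \<in> {1..k} \<Longrightarrow> 0 \<le> p d" using s0 by (simp add: p_def)
    show "(\<Sum>d\<in>{1..k}. p d) = 1" using s0 by (simp add: p_def s_def sum_divide_distrib[symmetric])
    show "real (m ^ card K) > 0" by (rule mpos)
    fix d assume d: "d \<in> {1..k}"
    have "p d \<le> real B / s" unfolding p_def using sb[OF d] s0 by (simp add: divide_right_mono)
    also have "\<dots> = 1 / real (m ^ card K)" using B1 mpos by (simp add: s_eq)
    finally show "p d \<le> 1 / real (m ^ card K)" .
  qed
  moreover have "QE N D A' K = - (\<Sum>d\<in>{1..k}. p d * ln (p d))"
    unfolding QE_def Let_def \<sigma>_def[symmetric] k_def[symmetric] s_def[symmetric] p_def using s0 by simp
  moreover have "ln (real (m ^ card K)) = real (card K) * ln (real m)"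
    using m1 by (simp add: ln_realpow)
  ultimately show ?thesis by (simp add: A'_def)
qed


lemma part2:
  fixes L :: nat and D :: "nat \<Rightarrow> nat"
  assumes L: "L > 0" and Dp: "\<forall>n\<in>{1..2^L}. D n > 0"
  shows "\<exists>A' :: tensor. \<forall>K\<in>canonical L.
              QE (2^L) D A' K
                \<ge> real (min (card K) (card ({1..2^L} - K))) * ln (real (Min (D ` {1..2^L})))"
proof -
  define N :: nat where "N = 2^L"
  define H :: nat where "H = 2^(L-1)"
  have NH: "N = 2 * H" unfolding N_def H_def using L by (cases L) auto
  have H1: "H \<ge> 1" by (simp add: H_def)
  define \<pi> where "\<pi> = (\<lambda>j::nat. if j \<le> H then j + H else j - H)"
  define m where "m = Min (D ` {1..N})"
  have fin: "finite (D ` {1..N})" by simp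
  have ne: "D ` {1..N} \<noteq> {}" using NH H1 by auto
  have mD: "m \<le> D j" if "j \<in> {1..N}" for j unfolding m_def using fin that by simp
  have m1: "m \<ge> 1"
  proof -
    have "m \<in> D ` {1..N}" unfolding m_def by (rule Min_in[OF fin ne])
    then show ?thesis using Dp by (auto simp: N_def)
  qed
  have pi1: "\<pi> j \<in> {1..N}" if "j \<in> {1..N}" for j using that NH H1 by (auto simp: \<pi>_def)
  have pi2: "\<pi> (\<pi> j) = j" if "j \<in> {1..N}" for j using that NH H1 by (auto simp: \<pi>_def)
  define A' :: tensor where "A' = (\<lambda>i. if (\<forall>j\<in>{1..N}. i j = i (\<pi> j) \<and> i j < m) then 1 else 0)"
  have "QE N D A' K \<ge> real (min (card K) (card ({1..N} - K))) * ln (real m)" if K: "K \<in> canonical L" for K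
  proof -
    from K obtain l n where l: "l \<le> L" "n \<in> {1..2^l}" and Kd: "K = {2^(L-l)*(n-1)+1 .. 2^(L-l)*n}"
      unfolding canonical_def by blast
    show ?thesis
    proof (cases "l = 0")
      case True
      then have "K = {1..N}" using Kd l by (simp add: N_def)
      then show ?thesis using QE_nonneg[of N D A' K] by simp
    next
      case False
      define q :: nat where "q = 2^(L-l)"
      define l' where "l' = l - 1"
      have ll: "l = Suc l'" using False by (simp add: l'_def)
      have Hq: "H = q * 2^l'"
        unfolding H_def q_def using l ll by (simp add: power_add[symmetric])
      have q1: "q \<ge> 1" by (simp add: q_def)
      have n: "1 \<le> n" "n \<le> 2 * 2^l'" using l ll by auto
      have Kq: "K = {q*(n-1)+1 .. q*n}" by (simp add: Kd q_def)
      have Ksub: "K \<subseteq> {1..N}" using canonical_sub[OF K] by (simp add: N_def)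
      have cK: "card K = q"
      proof -
        have "q * n = q * (n - 1) + q" using n(1) by (cases n) auto
        then show ?thesis by (simp add: Kq)
      qed
      have qH: "q \<le> H" using Hq by simp
      have cKc: "card ({1..N} - K) = N - q" using Ksub cK by (simp add: card_Diff_subset finite_subset)
      have mn: "min (card K) (card ({1..N} - K)) = card K" using cK cKc NH qH by simp
      have pK: "\<pi> j \<notin> K" if j: "j \<in> K" for j
      proof (cases "n \<le> 2^l'")
        case True
        have "q * n \<le> H" using True Hq by simp
        then have "j \<le> H" using j Kq by auto
        then have "\<pi> j = j + H" by (simp add: \<pi>_def)
        moreover have "j + H > q * n" using j Kq \<open>q * n \<le> H\<close> by auto
        ultimately show ?thesis using Kq by auto
      next
        case False
        then have "n - 1 \<ge> 2^l'" by simp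
        then have "q * (n - 1) \<ge> H" using Hq by simp
        then have jH: "j > H" using j Kq by auto
        then have "\<pi> j = j - H" by (simp add: \<pi>_def)
        moreover have "j \<le> N" using j Ksub by auto
        then have "j - H \<le> H" using NH by simp
        ultimately show ?thesis using Kq \<open>q * (n - 1) \<ge> H\<close> by auto
      qed
      have "QE N D A' K \<ge> real (card K) * ln (real m)"
        unfolding A'_def by (rule part2_K[OF Ksub m1 mD pi1 pi2 pK])
      then show ?thesis using mn by simp
    qed
  qed
  then show ?thesis by (auto simp: N_def m_def)
qed


theorem theorem1:
  fixes L R :: nat and D :: "nat \<Rightarrow> nat" and W A :: tensor and \<epsilon> :: real
  assumes "L > 0"
    and "\<forall>n\<in>{1..2^L}. D n > 0"
    and "R > 0"
    and "is_lctn L D R W"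
    and "0 \<le> \<epsilon>" and "\<epsilon> \<le> fnorm (2^L) D A / 4"
    and "fnorm (2^L) D (\<lambda>i. W i - A i) \<le> \<epsilon>"
  shows "(\<forall>K\<in>canonical L.
            QE (2^L) D A K
              \<le> ln (real R)
                 + (if fnorm (2^L) D A = 0 then 0 else 2 * \<epsilon> / fnorm (2^L) D A)
                     * ln (real (DK (2^L) D K))
                 + 2 * sqrt (if fnorm (2^L) D A = 0 then 0 else 2 * \<epsilon> / fnorm (2^L) D A))
         \<and> (\<exists>A' :: tensor. \<forall>K\<in>canonical L.
              QE (2^L) D A' K
                \<ge> real (min (card K) (card ({1..2^L} - K))) * ln (real (Min (D ` {1..2^L}))))"
proof -
  have P1: "\<forall>K\<in>canonical L.
            QE (2^L) D A K
              \<le> ln (real R)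
                 + (if fnorm (2^L) D A = 0 then 0 else 2 * \<epsilon> / fnorm (2^L) D A)
                     * ln (real (DK (2^L) D K))
                 + 2 * sqrt (if fnorm (2^L) D A = 0 then 0 else 2 * \<epsilon> / fnorm (2^L) D A)"
    using part1[OF assms(1) assms(3) assms(4) assms(5) assms(6) assms(7)] by blast
  have P2: "\<exists>A' :: tensor. \<forall>K\<in>canonical L.
              QE (2^L) D A' K
                \<ge> real (min (card K) (card ({1..2^L} - K))) * ln (real (Min (D ` {1..2^L})))"
    by (rule part2[OF assms(1) assms(2)])
  show ?thesis using P1 P2 by blast
qed

end
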